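(* Under the CRFE, $(\hat{\boldsymbol{\tau}}'-\boldsymbol{\tau}',\hat{\boldsymbol{\theta}}_x')'$ has mean zero, and for $1\le h\le H$, $\mathrm{Cov}(\hat{\boldsymbol{\tau}}-\boldsymbol{\tau},\hat{\boldsymbol{\theta}}_x[h])=\boldsymbol{W}_{\tau x}[h]=2^{-2(K-1)}\sum_{q=1}^Qn_q^{-1}(\boldsymbol{b}_q\boldsymbol{c}_q[h]')\otimes\boldsymbol{S}_{q,x}$, $\mathrm{Cov}(\hat{\boldsymbol{\theta}}_x[h])=\boldsymbol{W}_{xx}[h]=2^{-2(K-1)}\sum_{q=1}^Qn_q^{-1}(\boldsymbol{c}_q[h]\boldsymbol{c}_q[h]')\otimes\boldsymbol{S}_{xx}$, and $\mathrm{Cov}(\hat{\boldsymbol{\theta}}_x[h],\hat{\boldsymbol{\theta}}_x[\tilde h])=\boldsymbol{0}$ for $h\ne\tilde h$.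
   Context: Setup ($2^K$ factorial experiment, finite population). $K\ge1$ two-level factors, $Q=2^K$ treatment combinations $q=1,\dots,Q$; combination $q$ sets factor $k$ at $\iota_k(q)\in\{-1,+1\}$, bijectively onto $\{-1,+1\}^K$. $F=Q-1$ factorial effects, one per nonempty $A\subseteq\{1,\dots,K\}$, enumerated $f=1,\dots,F$, with $g_{fq}=\prod_{k\in A}\iota_k(q)$; $\boldsymbol{b}_q=(g_{1q},\dots,g_{Fq})'$. Units $i=1,\dots,n$ have fixed potential outcomes $Y_i(q)$ and covariates $\boldsymbol{x}_i\in\mathbb{R}^L$; $\bar Y(q),\bar{\boldsymbol{x}}$ means; $\boldsymbol{\tau}=2^{-(K-1)}\sum_q\boldsymbol{b}_q\bar Y(q)$. Finite-population (co)variances with divisor $n-1$: $\boldsymbol{S}_{xx}$ of $\boldsymbol{x}$; $\boldsymbol{S}_{q,x}$ between $Y(q)$ and $\boldsymbol{x}$. CRFE: fixed $n_q\ge1$, $\sum n_q=n$; $\boldsymbol{Z}$ uniform over assignments with $n_q$ units in combination $q$; $\hat{\bar Y}(q),\hat{\bar{\boldsymbol{x}}}(q)$ group-$q$ means of observed outcomes $Y_i(Z_i)$ and covariates; $\hat{\boldsymbol{\tau}}=2^{-(K-1)}\sum_q\boldsymbol{b}_q\hat{\bar Y}(q)$. Tiers: partition $\{1,\dots,F\}$ into disjoint nonempty $\mathcal{F}_1,\dots,\mathcal{F}_H$, $\mathcal{F}_{\overline h}=\bigcup_{l\le h}\mathcal{F}_l$. $\tilde{\boldsymbol{B}}=2^{-2(K-1)}\sum_qn_q^{-1}\boldsymbol{b}_q\boldsymbol{b}_q'$;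 $\boldsymbol{b}_q[\mathcal{I}]$ is the subvector with indices in $\mathcal{I}$ and $\tilde{\boldsymbol{B}}[\mathcal{I},\mathcal{J}]$ the submatrix. $\boldsymbol{c}_q[1]=\boldsymbol{b}_q[\mathcal{F}_1]$, and for $h\ge2$, $\boldsymbol{c}_q[h]=\boldsymbol{b}_q[\mathcal{F}_h]-\tilde{\boldsymbol{B}}[\mathcal{F}_h,\mathcal{F}_{\overline{h-1}}]\{\tilde{\boldsymbol{B}}[\mathcal{F}_{\overline{h-1}},\mathcal{F}_{\overline{h-1}}]\}^{-1}\boldsymbol{b}_q[\mathcal{F}_{\overline{h-1}}]$. $\hat{\boldsymbol{\theta}}_x[h]=2^{-(K-1)}\sum_q\boldsymbol{c}_q[h]\otimes\hat{\bar{\boldsymbol{x}}}(q)$ and $\hat{\boldsymbol{\theta}}_x=(\hat{\boldsymbol{\theta}}_x[1]',\dots,\hat{\boldsymbol{\theta}}_x[H]')'$. *)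

theory Defs
  imports Complex_Main "Jordan_Normal_Form.Matrix" "Jordan_Normal_Form.DL_Submatrix"
          "Jordan_Normal_Form.Gauss_Jordan_Elimination"
begin

text \<open>Conventions (all indices start at 0):
  treatment combinations q < Q = 2^K; factors k < K; factorial effects f < F = Q - 1;
  units i < n; covariates l < L; tiers h < H (tier h here is tier h+1 of the paper).
  iota q k is the level of factor k in combination q; eff f is the (nonempty) factor
  set A of effect f.  Y i q = Y_i(q), x i l = l-th covariate of unit i, nq q = n_q.\<close>

definition gcoef :: "(nat \<Rightarrow> nat \<Rightarrow> real) \<Rightarrow> (nat \<Rightarrow> nat set) \<Rightarrow> nat \<Rightarrow> nat \<Rightarrow> real" where
  "gcoef iota eff f q = (\<Prod>k\<in>eff f. iota q k)"

definition bvec :: "nat \<Rightarrow> (nat \<Rightarrow> nat \<Rightarrow> real) \<Rightarrow> (nat \<Rightarrow> nat set) \<Rightarrow> nat \<Rightarrow> real vec" where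
  "bvec K iota eff q = vec (2^K - 1) (\<lambda>f. gcoef iota eff f q)"

definition subvec :: "'a vec \<Rightarrow> nat set \<Rightarrow> 'a vec" where
  "subvec v I = vec (card {i. i < dim_vec v \<and> i \<in> I}) (\<lambda>j. v $ pick I j)"

definition Btil :: "nat \<Rightarrow> (nat \<Rightarrow> nat \<Rightarrow> real) \<Rightarrow> (nat \<Rightarrow> nat set) \<Rightarrow> (nat \<Rightarrow> nat) \<Rightarrow> real mat" where
  "Btil K iota eff nq = mat (2^K - 1) (2^K - 1)
     (\<lambda>(f, f'). (1 / 2 ^ (2 * (K - 1))) *
        (\<Sum>q<2^K. (1 / real (nq q)) * gcoef iota eff f q * gcoef iota eff f' q))"

text \<open>Union of tiers 0..h-1 (the paper's F_{overline{h-1}} for paper-tier h).\<close>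
definition prevtiers :: "(nat \<Rightarrow> nat set) \<Rightarrow> nat \<Rightarrow> nat set" where
  "prevtiers tier h = (\<Union>l<h. tier l)"

definition matinv :: "real mat \<Rightarrow> real mat" where
  "matinv A = the (mat_inverse A)"

definition cvec :: "nat \<Rightarrow> (nat \<Rightarrow> nat \<Rightarrow> real) \<Rightarrow> (nat \<Rightarrow> nat set) \<Rightarrow> (nat \<Rightarrow> nat)
                    \<Rightarrow> (nat \<Rightarrow> nat set) \<Rightarrow> nat \<Rightarrow> nat \<Rightarrow> real vec" where
  "cvec K iota eff nq tier q h =
     (if h = 0 then subvec (bvec K iota eff q) (tier 0)
      else subvec (bvec K iota eff q) (tier h)
           - (submatrix (Btil K iota eff nq) (tier h) (prevtiers tier h)
              * matinv (submatrix (Btil K iota eff nq) (prevtiers tier h) (prevtiers tier h)))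
             *\<^sub>v subvec (bvec K iota eff q) (prevtiers tier h))"

definition kron :: "real mat \<Rightarrow> real mat \<Rightarrow> real mat" where
  "kron A B = mat (dim_row A * dim_row B) (dim_col A * dim_col B)
     (\<lambda>(i, j). A $$ (i div dim_row B, j div dim_col B) * B $$ (i mod dim_row B, j mod dim_col B))"

definition kronv :: "real vec \<Rightarrow> real vec \<Rightarrow> real vec" where
  "kronv u v = vec (dim_vec u * dim_vec v) (\<lambda>i. u $ (i div dim_vec v) * v $ (i mod dim_vec v))"

definition outer :: "real vec \<Rightarrow> real vec \<Rightarrow> real mat" where
  "outer u v = mat (dim_vec u) (dim_vec v) (\<lambda>(i, j). u $ i * v $ j)"

definition msum :: "nat \<Rightarrow> nat \<Rightarrow> (nat \<Rightarrow> real mat) \<Rightarrow> nat set \<Rightarrow> real mat" where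
  "msum r c M S = mat r c (\<lambda>ij. \<Sum>q\<in>S. M q $$ ij)"

definition vsum :: "nat \<Rightarrow> (nat \<Rightarrow> real vec) \<Rightarrow> nat set \<Rightarrow> real vec" where
  "vsum d v S = vec d (\<lambda>i. \<Sum>q\<in>S. v q $ i)"

definition Ybar :: "nat \<Rightarrow> (nat \<Rightarrow> nat \<Rightarrow> real) \<Rightarrow> nat \<Rightarrow> real" where
  "Ybar n Y q = (\<Sum>i<n. Y i q) / real n"

definition xbar :: "nat \<Rightarrow> (nat \<Rightarrow> nat \<Rightarrow> real) \<Rightarrow> nat \<Rightarrow> real" where
  "xbar n x l = (\<Sum>i<n. x i l) / real n"

definition Sqx :: "nat \<Rightarrow> nat \<Rightarrow> (nat \<Rightarrow> nat \<Rightarrow> real) \<Rightarrow> (nat \<Rightarrow> nat \<Rightarrow> real) \<Rightarrow> nat \<Rightarrow> real mat" where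
  "Sqx n L Y x q = mat 1 L (\<lambda>(_, l).
     (\<Sum>i<n. (Y i q - Ybar n Y q) * (x i l - xbar n x l)) / (real n - 1))"

definition Sxx :: "nat \<Rightarrow> nat \<Rightarrow> (nat \<Rightarrow> nat \<Rightarrow> real) \<Rightarrow> real mat" where
  "Sxx n L x = mat L L (\<lambda>(l, l').
     (\<Sum>i<n. (x i l - xbar n x l) * (x i l' - xbar n x l')) / (real n - 1))"

text \<open>Set of CRFE assignments: z i is the treatment combination of unit i.\<close>
definition assignments :: "nat \<Rightarrow> nat \<Rightarrow> (nat \<Rightarrow> nat) \<Rightarrow> (nat \<Rightarrow> nat) set" where
  "assignments n Q nq = {z \<in> {0..<n} \<rightarrow>\<^sub>E {0..<Q}. \<forall>q<Q. card {i. i < n \<and> z i = q} = nq q}"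

definition Ex :: "(nat \<Rightarrow> nat) set \<Rightarrow> ((nat \<Rightarrow> nat) \<Rightarrow> real) \<Rightarrow> real" where
  "Ex \<Omega> X = (\<Sum>z\<in>\<Omega>. X z) / real (card \<Omega>)"

definition Evec :: "(nat \<Rightarrow> nat) set \<Rightarrow> nat \<Rightarrow> ((nat \<Rightarrow> nat) \<Rightarrow> real vec) \<Rightarrow> real vec" where
  "Evec \<Omega> d X = vec d (\<lambda>i. Ex \<Omega> (\<lambda>z. X z $ i))"

definition Cov :: "(nat \<Rightarrow> nat) set \<Rightarrow> nat \<Rightarrow> nat \<Rightarrow> ((nat \<Rightarrow> nat) \<Rightarrow> real vec)
                    \<Rightarrow> ((nat \<Rightarrow> nat) \<Rightarrow> real vec) \<Rightarrow> real mat" where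
  "Cov \<Omega> d1 d2 X V = mat d1 d2 (\<lambda>(i, j).
     Ex \<Omega> (\<lambda>z. (X z $ i - Ex \<Omega> (\<lambda>w. X w $ i)) * (V z $ j - Ex \<Omega> (\<lambda>w. V w $ j))))"

definition Yhat :: "nat \<Rightarrow> (nat \<Rightarrow> nat) \<Rightarrow> (nat \<Rightarrow> nat \<Rightarrow> real) \<Rightarrow> (nat \<Rightarrow> nat) \<Rightarrow> nat \<Rightarrow> real" where
  "Yhat n nq Y z q = (\<Sum>i\<in>{i. i < n \<and> z i = q}. Y i (z i)) / real (nq q)"

definition xhat :: "nat \<Rightarrow> nat \<Rightarrow> (nat \<Rightarrow> nat) \<Rightarrow> (nat \<Rightarrow> nat \<Rightarrow> real) \<Rightarrow> (nat \<Rightarrow> nat) \<Rightarrow> nat \<Rightarrow> real vec" where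
  "xhat n L nq x z q = vec L (\<lambda>l. (\<Sum>i\<in>{i. i < n \<and> z i = q}. x i l) / real (nq q))"

definition tau :: "nat \<Rightarrow> (nat \<Rightarrow> nat \<Rightarrow> real) \<Rightarrow> (nat \<Rightarrow> nat set) \<Rightarrow> nat \<Rightarrow> (nat \<Rightarrow> nat \<Rightarrow> real) \<Rightarrow> real vec" where
  "tau K iota eff n Y = vsum (2^K - 1) (\<lambda>q. (Ybar n Y q / 2 ^ (K - 1)) \<cdot>\<^sub>v bvec K iota eff q) {..<2^K}"

definition tauhat :: "nat \<Rightarrow> (nat \<Rightarrow> nat \<Rightarrow> real) \<Rightarrow> (nat \<Rightarrow> nat set) \<Rightarrow> nat \<Rightarrow> (nat \<Rightarrow> nat)
                      \<Rightarrow> (nat \<Rightarrow> nat \<Rightarrow> real) \<Rightarrow> (nat \<Rightarrow> nat) \<Rightarrow> real vec" where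
  "tauhat K iota eff n nq Y z = vsum (2^K - 1) (\<lambda>q. (Yhat n nq Y z q / 2 ^ (K - 1)) \<cdot>\<^sub>v bvec K iota eff q) {..<2^K}"

definition thetahat :: "nat \<Rightarrow> (nat \<Rightarrow> nat \<Rightarrow> real) \<Rightarrow> (nat \<Rightarrow> nat set) \<Rightarrow> nat \<Rightarrow> nat \<Rightarrow> (nat \<Rightarrow> nat)
                        \<Rightarrow> (nat \<Rightarrow> nat set) \<Rightarrow> (nat \<Rightarrow> nat \<Rightarrow> real) \<Rightarrow> nat \<Rightarrow> (nat \<Rightarrow> nat) \<Rightarrow> real vec" where
  "thetahat K iota eff n L nq tier x h z = vsum (card (tier h) * L)
     (\<lambda>q. (1 / 2 ^ (K - 1)) \<cdot>\<^sub>v kronv (cvec K iota eff nq tier q h) (xhat n L nq x z q)) {..<2^K}"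

definition thetahat_all :: "nat \<Rightarrow> (nat \<Rightarrow> nat \<Rightarrow> real) \<Rightarrow> (nat \<Rightarrow> nat set) \<Rightarrow> nat \<Rightarrow> nat \<Rightarrow> (nat \<Rightarrow> nat)
                        \<Rightarrow> (nat \<Rightarrow> nat set) \<Rightarrow> nat \<Rightarrow> (nat \<Rightarrow> nat \<Rightarrow> real) \<Rightarrow> (nat \<Rightarrow> nat) \<Rightarrow> real vec" where
  "thetahat_all K iota eff n L nq tier H x z =
     foldr (\<lambda>h v. thetahat K iota eff n L nq tier x h z @\<^sub>v v) [0..<H] (vec 0 (\<lambda>_. 0))"

definition W_taux :: "nat \<Rightarrow> (nat \<Rightarrow> nat \<Rightarrow> real) \<Rightarrow> (nat \<Rightarrow> nat set) \<Rightarrow> nat \<Rightarrow> nat \<Rightarrow> (nat \<Rightarrow> nat)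
                        \<Rightarrow> (nat \<Rightarrow> nat set) \<Rightarrow> (nat \<Rightarrow> nat \<Rightarrow> real) \<Rightarrow> (nat \<Rightarrow> nat \<Rightarrow> real) \<Rightarrow> nat \<Rightarrow> real mat" where
  "W_taux K iota eff n L nq tier Y x h = msum (2^K - 1) (card (tier h) * L)
     (\<lambda>q. (1 / (2 ^ (2 * (K - 1)) * real (nq q))) \<cdot>\<^sub>m
           kron (outer (bvec K iota eff q) (cvec K iota eff nq tier q h)) (Sqx n L Y x q)) {..<2^K}"

definition W_xx :: "nat \<Rightarrow> (nat \<Rightarrow> nat \<Rightarrow> real) \<Rightarrow> (nat \<Rightarrow> nat set) \<Rightarrow> nat \<Rightarrow> nat \<Rightarrow> (nat \<Rightarrow> nat)
                        \<Rightarrow> (nat \<Rightarrow> nat set) \<Rightarrow> (nat \<Rightarrow> nat \<Rightarrow> real) \<Rightarrow> nat \<Rightarrow> real mat" where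
  "W_xx K iota eff n L nq tier x h = msum (card (tier h) * L) (card (tier h) * L)
     (\<lambda>q. (1 / (2 ^ (2 * (K - 1)) * real (nq q))) \<cdot>\<^sub>m
           kron (outer (cvec K iota eff nq tier q h) (cvec K iota eff nq tier q h)) (Sxx n L x)) {..<2^K}"

end

theory Submission
  imports Defs "Jordan_Normal_Form.Determinant"
begin

definition ind :: "bool \<Rightarrow> real" where "ind P = (if P then 1 else 0)"

lemma sum_ind_card: "finite A \<Longrightarrow> (\<Sum>x\<in>A. ind (P x)) = real (card {x\<in>A. P x})"
  by (simp add: ind_def sum.inter_filter[symmetric])

lemma sum_ind_mult: "finite A \<Longrightarrow> (\<Sum>x\<in>A. ind (P x) * f x) = sum f {x\<in>A. P x}"
proof -
  assume "finite A"
  then have "sum f {x\<in>A. P x} = (\<Sum>x\<in>A. if P x then f x else 0)" by (rule sum.inter_filter)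
  also have "\<dots> = (\<Sum>x\<in>A. ind (P x) * f x)" by (rule sum.cong) (auto simp: ind_def)
  finally show ?thesis by simp
qed

lemma delta_sum: "(a::nat) < Q \<Longrightarrow> f a = (\<Sum>q<Q. ind (a = q) * f q)"
proof -
  assume a: "a < Q"
  have "(\<Sum>q<Q. ind (a = q) * f q) = (\<Sum>q<Q. if a = q then f q else 0)"
    by (rule sum.cong) (auto simp: ind_def)
  then show ?thesis using a by simp
qed

lemma exists_assign:
  fixes c :: "nat \<Rightarrow> nat" and m :: nat
  shows  "\<exists>z. z \<in> {0..<sum c {..<m}} \<rightarrow>\<^sub>E {0..<m} \<and> (\<forall>q<m. card {i. i < sum c {..<m} \<and> z i = q} = c q)"
proof (induction m)
  case 0 show ?case by (intro exI[of _ "\<lambda>_. undefined"]) auto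
next
  case (Suc m)
  then obtain z where z: "z \<in> {0..<sum c {..<m}} \<rightarrow>\<^sub>E {0..<m}"
    and cz: "\<forall>q<m. card {i. i < sum c {..<m} \<and> z i = q} = c q" by blast
  define N where "N = sum c {..<m}"
  define z' where "z' = (\<lambda>i. if i < N then z i else if i < N + c m then m else undefined)"
  have sN: "sum c {..<Suc m} = N + c m" by (simp add: N_def)
  have "z' \<in> {0..<N + c m} \<rightarrow>\<^sub>E {0..<Suc m}" using z unfolding z'_def N_def PiE_def Pi_def extensional_def by auto
  moreover have "card {i. i < N + c m \<and> z' i = q} = c q" if "q < Suc m" for q
  proof (cases "q < m")
    case True
    have "{i. i < N + c m \<and> z' i = q} = {i. i < N \<and> z i = q}" using True by (auto simp: z'_def)
    then show ?thesis using cz True N_def by simp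
  next
    case False
    then have q: "q = m" using that by simp
    have "{i. i < N + c m \<and> z' i = q} = {N..<N + c m}" using z q PiE_mem[OF z]
      by (auto simp: z'_def N_def)
    then show ?thesis using q by simp
  qed
  ultimately show ?case unfolding sN by blast
qed

definition sw :: "nat \<Rightarrow> nat \<Rightarrow> nat \<Rightarrow> nat" where
  "sw a b k = (if k = a then b else if k = b then a else k)"

lemma sw_sw[simp]: "sw a b (sw a b k) = k" by (simp add: sw_def)
lemma sw_lt: "a < n \<Longrightarrow> b < n \<Longrightarrow> (sw a b k < n) = (k < n)" by (simp add: sw_def)
lemma sw_a[simp]: "sw a b a = b" and sw_b[simp]: "sw a b b = a" by (auto simp: sw_def)
lemma sw_other: "k \<noteq> a \<Longrightarrow> k \<noteq> b \<Longrightarrow> sw a b k = k" by (simp add: sw_def)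
lemma inj_sw: "inj (sw a b)" by (metis injI sw_sw)

locale crfe =
  fixes n Q :: nat and nq :: "nat \<Rightarrow> nat"
  assumes nq_pos: "\<forall>q<Q. nq q \<ge> 1" and nq_sum: "(\<Sum>q<Q. nq q) = n" and Q2: "Q \<ge> 2"
begin

abbreviation "Om \<equiv> assignments n Q nq"

lemma n_ge: "n \<ge> 2"
proof -
  have "(\<Sum>q<Q. (1::nat)) \<le> (\<Sum>q<Q. nq q)" using nq_pos by (intro sum_mono) auto
  then show ?thesis using Q2 nq_sum by simp
qed

lemma nq_real_pos: "q < Q \<Longrightarrow> real (nq q) > 0" using nq_pos by force

lemma finite_Om: "finite Om"
proof (rule finite_subset)
  show "Om \<subseteq> {0..<n} \<rightarrow>\<^sub>E {0..<Q}" unfolding assignments_def by auto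
  show "finite ({0..<n} \<rightarrow>\<^sub>E {0..<Q})" by (rule finite_PiE) auto
qed

lemma Om_nonempty: "Om \<noteq> {}"
  using exists_assign[of nq Q] nq_sum unfolding assignments_def by auto

lemma card_Om_pos: "real (card Om) > 0"
  using finite_Om Om_nonempty by (simp add: card_gt_0_iff)

lemma Om_range: "z \<in> Om \<Longrightarrow> i < n \<Longrightarrow> z i < Q"
  unfolding assignments_def by auto

lemma Om_card: "z \<in> Om \<Longrightarrow> q < Q \<Longrightarrow> card {i. i < n \<and> z i = q} = nq q"
  unfolding assignments_def by auto

lemma Om_swap:
  assumes a: "a < n" and b: "b < n" and z: "z \<in> Om"
  shows "z \<circ> sw a b \<in> Om"
proof -
  have zp: "z \<in> {0..<n} \<rightarrow>\<^sub>E {0..<Q}" using z unfolding assignments_def by auto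
  have "z \<circ> sw a b \<in> {0..<n} \<rightarrow>\<^sub>E {0..<Q}"
  proof
    fix k assume "k \<in> {0..<n}" then show "(z \<circ> sw a b) k \<in> {0..<Q}"
      using zp sw_lt[OF a b, of k] by auto
  next
    fix k assume "k \<notin> {0..<n}"
    then have "sw a b k = k" using a b by (intro sw_other) auto
    then show "(z \<circ> sw a b) k = undefined" using zp \<open>k \<notin> {0..<n}\<close> by auto
  qed
  moreover have "card {i. i < n \<and> (z \<circ> sw a b) i = q} = nq q" if "q < Q" for q
  proof -
    have "{i. i < n \<and> (z \<circ> sw a b) i = q} = sw a b ` {i. i < n \<and> z i = q}"
    proof (rule subset_antisym; rule subsetI)
      fix k assume "k \<in> {i. i < n \<and> (z \<circ> sw a b) i = q}"
      then have "sw a b k \<in> {i. i < n \<and> z i = q}" using sw_lt[OF a b, of k] by simp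
      then show "k \<in> sw a b ` {i. i < n \<and> z i = q}" by (rule rev_image_eqI) simp
    next
      fix k assume "k \<in> sw a b ` {i. i < n \<and> z i = q}"
      then obtain k' where "k' < n" "z k' = q" "k = sw a b k'" by blast
      then show "k \<in> {i. i < n \<and> (z \<circ> sw a b) i = q}" using sw_lt[OF a b, of k'] by simp
    qed
    then have "card {i. i < n \<and> (z \<circ> sw a b) i = q} = card {i. i < n \<and> z i = q}"
      using inj_sw by (simp add: card_image inj_on_def inj_def)
    then show ?thesis using Om_card[OF z that] by simp
  qed
  ultimately show ?thesis unfolding assignments_def by blast
qed

lemma sum_swap_inv:
  assumes a: "a < n" and b: "b < n"
  shows "(\<Sum>z\<in>Om. \<Phi> (z \<circ> sw a b)) = (\<Sum>z\<in>Om. \<Phi> z)"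
proof (rule sum.reindex_bij_betw)
  have inv: "z \<circ> sw a b \<circ> sw a b = z" for z by (rule ext) simp
  show "bij_betw (\<lambda>z. z \<circ> sw a b) Om Om"
    by (rule bij_betw_byWitness[where f' = "\<lambda>z. z \<circ> sw a b"]) (use inv Om_swap[OF a b] in auto)
qed

lemma E1:
  assumes i: "i < n" and q: "q < Q"
  shows "(\<Sum>z\<in>Om. ind (z i = q)) = real (nq q) * card Om / n"
proof -
  have eq: "(\<Sum>z\<in>Om. ind (z j = q)) = (\<Sum>z\<in>Om. ind (z i = q))" if j: "j < n" for j
    using sum_swap_inv[OF i j, of "\<lambda>z. ind (z i = q)"] by simp
  have "(\<Sum>j<n. \<Sum>z\<in>Om. ind (z j = q)) = (\<Sum>z\<in>Om. \<Sum>j<n. ind (z j = q))" by (rule sum.swap)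
  also have "\<dots> = (\<Sum>z\<in>Om. real (nq q))"
  proof (rule sum.cong[OF refl])
    fix z assume z: "z \<in> Om"
    have "{j \<in> {..<n}. z j = q} = {j. j < n \<and> z j = q}" by auto
    then show "(\<Sum>j<n. ind (z j = q)) = real (nq q)" using Om_card[OF z q] by (simp add: sum_ind_card)
  qed
  finally have "real n * (\<Sum>z\<in>Om. ind (z i = q)) = real (nq q) * card Om" using eq by simp
  then show ?thesis using n_ge by (simp add: field_simps)
qed

lemma E2:
  assumes i: "i < n" and j: "j < n" and ij: "i \<noteq> j" and q: "q < Q" and q': "q' < Q"
  shows "(\<Sum>z\<in>Om. ind (z i = q) * ind (z j = q')) * (real n - 1)
       = (real (nq q') - ind (q = q')) * (\<Sum>z\<in>Om. ind (z i = q))"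
proof -
  have eq: "(\<Sum>z\<in>Om. ind (z i = q) * ind (z j' = q')) = (\<Sum>z\<in>Om. ind (z i = q) * ind (z j = q'))"
    if j': "j' \<in> {..<n} - {i}" for j'
  proof -
    have "sw j j' i = i" using j' ij by (simp add: sw_other)
    then show ?thesis using sum_swap_inv[OF j, of j' "\<lambda>z. ind (z i = q) * ind (z j = q')"] j' by simp
  qed
  have "(\<Sum>j'\<in>{..<n} - {i}. \<Sum>z\<in>Om. ind (z i = q) * ind (z j' = q'))
        = (\<Sum>z\<in>Om. ind (z i = q) * (\<Sum>j'\<in>{..<n} - {i}. ind (z j' = q')))"
    by (simp add: sum.swap[of _ "{..<n} - {i}"] sum_distrib_left)
  also have "\<dots> = (\<Sum>z\<in>Om. ind (z i = q) * (real (nq q') - ind (q = q')))"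
  proof (rule sum.cong[OF refl])
    fix z assume z: "z \<in> Om"
    have "{j \<in> {..<n}. z j = q'} = {j. j < n \<and> z j = q'}" by auto
    then have "(\<Sum>j'<n. ind (z j' = q')) = real (nq q')" using Om_card[OF z q'] by (simp add: sum_ind_card)
    then have "(\<Sum>j'\<in>{..<n} - {i}. ind (z j' = q')) = real (nq q') - ind (z i = q')"
      using i by (simp add: sum_diff1)
    then show "ind (z i = q) * (\<Sum>j'\<in>{..<n} - {i}. ind (z j' = q')) = ind (z i = q) * (real (nq q') - ind (q = q'))"
      by (cases "z i = q") (auto simp: ind_def)
  qed
  also have "\<dots> = (real (nq q') - ind (q = q')) * (\<Sum>z\<in>Om. ind (z i = q))"
    by (simp add: sum_distrib_left mult.commute)
  finally have A: "(\<Sum>j'\<in>{..<n} - {i}. \<Sum>z\<in>Om. ind (z i = q) * ind (z j' = q'))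
     = (real (nq q') - ind (q = q')) * (\<Sum>z\<in>Om. ind (z i = q))" .
  have "(\<Sum>j'\<in>{..<n} - {i}. \<Sum>z\<in>Om. ind (z i = q) * ind (z j' = q'))
      = (\<Sum>j'\<in>{..<n} - {i}. \<Sum>z\<in>Om. ind (z i = q) * ind (z j = q'))"
    using eq by (rule sum.cong[OF refl])
  also have "\<dots> = (real n - 1) * (\<Sum>z\<in>Om. ind (z i = q) * ind (z j = q'))"
    using i n_ge by (simp add: card_Diff_singleton of_nat_diff)
  finally show ?thesis using A by (simp add: mult.commute)
qed

end

definition Prb :: "nat \<Rightarrow> (nat \<Rightarrow> nat) \<Rightarrow> nat \<Rightarrow> nat \<Rightarrow> nat \<Rightarrow> nat \<Rightarrow> real" where
  "Prb n nq i j q q' = (if i = j then ind (q = q') * real (nq q) / real n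
     else real (nq q) * (real (nq q') - ind (q = q')) / (real n * (real n - 1)))"

lemma aux1:
  fixes a m :: real assumes "m \<noteq> 0" "m - 1 \<noteq> 0"
  shows "a / m = a * (a - 1) / (m * (m - 1)) + (1 * a / (m - 1) - a * a / (m * (m - 1)))"
proof -
  have "a * (a - 1) / (m * (m - 1)) + (1 * a / (m - 1) - a * a / (m * (m - 1)))
     = (a * (a - 1) + a * m - a * a) / (m * (m - 1))"
    using assms by (simp add: add_divide_distrib diff_divide_distrib)
  also have "\<dots> = (a * (m - 1)) / (m * (m - 1))" by (simp add: algebra_simps)
  also have "\<dots> = a / m" using assms by simp
  finally show ?thesis by simp
qed

lemma div_aux: "(S::real) * (m - 1) = Y \<Longrightarrow> m - 1 \<noteq> 0 \<Longrightarrow> m \<noteq> 0 \<Longrightarrow> S = Y / (m - 1)"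
  by (simp add: eq_divide_eq)

lemma alg_moment:
  fixes \<alpha> \<beta> :: "nat \<Rightarrow> nat \<Rightarrow> real"
  assumes n: "n \<ge> 2" and nqp: "\<forall>q<Q. nq q \<ge> 1"
    and ca: "\<forall>q<Q. (\<Sum>i<n. \<alpha> i q) = 0" and cb: "\<forall>i<n. (\<Sum>q<Q. \<beta> i q) = 0"
  shows "(\<Sum>i<n. \<Sum>j<n. \<Sum>q<Q. \<Sum>q'<Q. (\<alpha> i q / nq q) * (\<beta> j q' / nq q') * Prb n nq i j q q')
       = (\<Sum>i<n. \<Sum>q<Q. \<alpha> i q * \<beta> i q / (nq q * (real n - 1)))"
proof -
  define \<gamma> where "\<gamma> i q = \<alpha> i q / nq q" for i q
  define \<delta> where "\<delta> i q = \<beta> i q / nq q" for i q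
  define C where "C q q' = real (nq q) * (real (nq q') - ind (q = q')) / (real n * (real n - 1))" for q q'
  define D where "D q q' = ind (q = q') * real (nq q) / (real n - 1) - real (nq q) * real (nq q') / (real n * (real n - 1))" for q q'
  have n0: "real n \<noteq> 0" "real n - 1 \<noteq> 0" using n by auto
  have split: "Prb n nq i j q q' = C q q' + (if i = j then D q q' else 0)" for i j q q'
  proof (cases "i = j")
    case True
    show ?thesis
    proof (cases "q = q'")
      case True
      then show ?thesis using \<open>i = j\<close> aux1[OF n0, of "real (nq q)"] by (simp add: Prb_def C_def D_def ind_def)
    next
      case False
      then show ?thesis using \<open>i = j\<close> by (simp add: Prb_def C_def D_def ind_def)
    qed
  next
    case False
    then show ?thesis by (simp add: Prb_def C_def)
  qed
  have S1: "(\<Sum>i<n. \<Sum>j<n. \<Sum>q<Q. \<Sum>q'<Q. \<gamma> i q * \<delta> j q' * C q q') = 0"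
  proof -
    have "(\<Sum>i<n. \<Sum>j<n. \<Sum>q<Q. \<Sum>q'<Q. \<gamma> i q * \<delta> j q' * C q q')
        = (\<Sum>i<n. \<Sum>q<Q. \<Sum>j<n. \<Sum>q'<Q. \<gamma> i q * \<delta> j q' * C q q')"
      by (rule sum.cong[OF refl], rule sum.swap)
    also have "\<dots> = (\<Sum>q<Q. \<Sum>i<n. \<Sum>j<n. \<Sum>q'<Q. \<gamma> i q * \<delta> j q' * C q q')"
      by (rule sum.swap)
    also have "\<dots> = (\<Sum>q<Q. \<Sum>i<n. \<gamma> i q * (\<Sum>j<n. \<Sum>q'<Q. \<delta> j q' * C q q'))"
      by (simp add: sum_distrib_left mult.assoc)
    also have "\<dots> = (\<Sum>q<Q. (\<Sum>i<n. \<gamma> i q) * (\<Sum>j<n. \<Sum>q'<Q. \<delta> j q' * C q q'))"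
      by (simp add: sum_distrib_right)
    also have "\<dots> = 0"
    proof (rule sum.neutral, rule ballI)
      fix q assume "q \<in> {..<Q}"
      then have "(\<Sum>i<n. \<gamma> i q) = 0" using ca by (simp add: \<gamma>_def sum_divide_distrib[symmetric])
      then show "(\<Sum>i<n. \<gamma> i q) * (\<Sum>j<n. \<Sum>q'<Q. \<delta> j q' * C q q') = 0" by simp
    qed
    finally show ?thesis .
  qed
  have S2: "(\<Sum>j<n. \<Sum>q<Q. \<Sum>q'<Q. \<gamma> i q * \<delta> j q' * (if i = j then D q q' else 0))
      = (\<Sum>q<Q. \<alpha> i q * \<beta> i q / (nq q * (real n - 1)))" if i: "i < n" for i
  proof -
    have "(\<Sum>j<n. \<Sum>q<Q. \<Sum>q'<Q. \<gamma> i q * \<delta> j q' * (if i = j then D q q' else 0))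
        = (\<Sum>j<n. if i = j then (\<Sum>q<Q. \<Sum>q'<Q. \<gamma> i q * \<delta> i q' * D q q') else 0)"
      by (rule sum.cong[OF refl]) auto
    also have "\<dots> = (\<Sum>q<Q. \<Sum>q'<Q. \<gamma> i q * \<delta> i q' * D q q')" using i by simp
    also have "\<dots> = (\<Sum>q<Q. \<Sum>q'<Q. \<gamma> i q * \<delta> i q' * (if q = q' then real (nq q) / (real n - 1) else 0))
        - (\<Sum>q<Q. \<Sum>q'<Q. \<gamma> i q * \<delta> i q' * (real (nq q) * real (nq q') / (real n * (real n - 1))))"
    proof -
      have "(\<Sum>q<Q. \<Sum>q'<Q. \<gamma> i q * \<delta> i q' * D q q')
         = (\<Sum>q<Q. \<Sum>q'<Q. \<gamma> i q * \<delta> i q' * (if q = q' then real (nq q) / (real n - 1) else 0)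
              - \<gamma> i q * \<delta> i q' * (real (nq q) * real (nq q') / (real n * (real n - 1))))"
        by (intro sum.cong refl) (simp add: D_def ind_def right_diff_distrib)
      then show ?thesis by (simp add: sum_subtractf)
    qed
    also have "(\<Sum>q<Q. \<Sum>q'<Q. \<gamma> i q * \<delta> i q' * (if q = q' then real (nq q) / (real n - 1) else 0))
        = (\<Sum>q<Q. \<alpha> i q * \<beta> i q / (nq q * (real n - 1)))"
    proof (rule sum.cong[OF refl])
      fix q assume q: "q \<in> {..<Q}"
      have "(\<Sum>q'<Q. \<gamma> i q * \<delta> i q' * (if q = q' then real (nq q) / (real n - 1) else 0))
          = \<gamma> i q * \<delta> i q * (real (nq q) / (real n - 1))"
        using q by (simp add: if_distrib cong: if_cong)
      also have "\<dots> = \<alpha> i q * \<beta> i q / (nq q * (real n - 1))"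
      proof -
        have "real (nq q) \<noteq> 0" using nqp q by force
        then show ?thesis using n0 by (simp add: \<gamma>_def \<delta>_def field_simps)
      qed
      finally show "(\<Sum>q'<Q. \<gamma> i q * \<delta> i q' * (if q = q' then real (nq q) / (real n - 1) else 0))
          = \<alpha> i q * \<beta> i q / (nq q * (real n - 1))" .
    qed
    also have "(\<Sum>q<Q. \<Sum>q'<Q. \<gamma> i q * \<delta> i q' * (real (nq q) * real (nq q') / (real n * (real n - 1)))) = 0"
    proof (rule sum.neutral, rule ballI)
      fix q assume q: "q \<in> {..<Q}"
      have "(\<Sum>q'<Q. \<gamma> i q * \<delta> i q' * (real (nq q) * real (nq q') / (real n * (real n - 1))))
          = (\<Sum>q'<Q. (\<gamma> i q * real (nq q) / (real n * (real n - 1))) * \<beta> i q')"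
      proof (rule sum.cong[OF refl])
        fix q' assume "q' \<in> {..<Q}"
        then have "real (nq q') \<noteq> 0" using nqp by force
        then show "\<gamma> i q * \<delta> i q' * (real (nq q) * real (nq q') / (real n * (real n - 1)))
            = (\<gamma> i q * real (nq q) / (real n * (real n - 1))) * \<beta> i q'"
          by (simp add: \<delta>_def field_simps)
      qed
      also have "\<dots> = (\<gamma> i q * real (nq q) / (real n * (real n - 1))) * (\<Sum>q'<Q. \<beta> i q')"
        by (rule sum_distrib_left[symmetric])
      also have "\<dots> = 0" using cb i by simp
      finally show "(\<Sum>q'<Q. \<gamma> i q * \<delta> i q' * (real (nq q) * real (nq q') / (real n * (real n - 1)))) = 0" .
    qed
    finally show ?thesis by simp
  qed
  have "(\<Sum>i<n. \<Sum>j<n. \<Sum>q<Q. \<Sum>q'<Q. (\<alpha> i q / nq q) * (\<beta> j q' / nq q') * Prb n nq i j q q')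
      = (\<Sum>i<n. \<Sum>j<n. \<Sum>q<Q. \<Sum>q'<Q. \<gamma> i q * \<delta> j q' * C q q')
      + (\<Sum>i<n. \<Sum>j<n. \<Sum>q<Q. \<Sum>q'<Q. \<gamma> i q * \<delta> j q' * (if i = j then D q q' else 0))"
    by (simp add: split \<gamma>_def \<delta>_def distrib_left sum.distrib)
  also have "\<dots> = (\<Sum>i<n. \<Sum>q<Q. \<alpha> i q * \<beta> i q / (nq q * (real n - 1)))"
    using S1 S2 by simp
  finally show ?thesis .
qed

context crfe begin

lemma E12:
  assumes i: "i < n" and j: "j < n" and q: "q < Q" and q': "q' < Q"
  shows "(\<Sum>z\<in>Om. ind (z i = q) * ind (z j = q')) = Prb n nq i j q q' * card Om"
proof (cases "i = j")
  case True
  have "(\<Sum>z\<in>Om. ind (z i = q) * ind (z j = q')) = (\<Sum>z\<in>Om. ind (q = q') * ind (z i = q))"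
    using True by (intro sum.cong refl) (auto simp: ind_def)
  also have "\<dots> = ind (q = q') * (\<Sum>z\<in>Om. ind (z i = q))"
    by (simp add: sum_distrib_left)
  also have "\<dots> = ind (q = q') * (real (nq q) * card Om / n)"
    using E1[OF i q] by simp
  finally show ?thesis using True by (simp add: Prb_def)
next
  case False
  have "(\<Sum>z\<in>Om. ind (z i = q) * ind (z j = q')) * (real n - 1)
       = (real (nq q') - ind (q = q')) * (real (nq q) * card Om / n)"
    using E2[OF i j False q q'] E1[OF i q] by simp
  moreover have "real n - 1 \<noteq> 0" "real n \<noteq> 0" using n_ge by simp_all
  ultimately have "(\<Sum>z\<in>Om. ind (z i = q) * ind (z j = q'))
       = (real (nq q') - ind (q = q')) * (real (nq q) * card Om / n) / (real n - 1)"
    using div_aux by blast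
  also have "\<dots> = real (nq q) * (real (nq q') - ind (q = q')) / (real n * (real n - 1)) * card Om"
    by (simp add: field_simps)
  finally show ?thesis using False by (simp add: Prb_def)
qed

lemma EB1:
  "(\<Sum>z\<in>Om. \<Sum>i<n. \<gamma> i (z i)) = (\<Sum>i<n. \<Sum>q<Q. \<gamma> i q * (real (nq q) / n)) * card Om"
proof -
  have "(\<Sum>z\<in>Om. \<Sum>i<n. \<gamma> i (z i)) = (\<Sum>z\<in>Om. \<Sum>i<n. \<Sum>q<Q. \<gamma> i q * ind (z i = q))"
    by (intro sum.cong refl) (metis (no_types, lifting) Om_range delta_sum lessThan_iff mult.commute sum.cong)
  also have "\<dots> = (\<Sum>i<n. \<Sum>q<Q. \<Sum>z\<in>Om. \<gamma> i q * ind (z i = q))"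
    by (simp only: sum.swap[where A = Om])
  also have "\<dots> = (\<Sum>i<n. \<Sum>q<Q. \<gamma> i q * (real (nq q) / n) * card Om)"
    by (intro sum.cong refl) (simp add: sum_distrib_left[symmetric] E1)
  finally show ?thesis by (simp only: sum_distrib_right)
qed

lemma EB2:
  "(\<Sum>z\<in>Om. (\<Sum>i<n. \<gamma> i (z i)) * (\<Sum>j<n. \<delta> j (z j)))
     = (\<Sum>i<n. \<Sum>j<n. \<Sum>q<Q. \<Sum>q'<Q. \<gamma> i q * \<delta> j q' * Prb n nq i j q q') * card Om"
proof -
  have "(\<Sum>z\<in>Om. (\<Sum>i<n. \<gamma> i (z i)) * (\<Sum>j<n. \<delta> j (z j)))
     = (\<Sum>z\<in>Om. \<Sum>i<n. \<Sum>j<n. \<Sum>q<Q. \<Sum>q'<Q. \<gamma> i q * \<delta> j q' * (ind (z i = q) * ind (z j = q')))"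
  proof (rule sum.cong[OF refl])
    fix z assume z: "z \<in> Om"
    have "(\<Sum>i<n. \<gamma> i (z i)) * (\<Sum>j<n. \<delta> j (z j)) = (\<Sum>i<n. \<Sum>j<n. \<gamma> i (z i) * \<delta> j (z j))"
      by (rule sum_product)
    also have "\<dots> = (\<Sum>i<n. \<Sum>j<n. (\<Sum>q<Q. ind (z i = q) * \<gamma> i q) * (\<Sum>q'<Q. ind (z j = q') * \<delta> j q'))"
      using Om_range[OF z] delta_sum by (intro sum.cong refl) (metis lessThan_iff)
    also have "\<dots> = (\<Sum>i<n. \<Sum>j<n. \<Sum>q<Q. \<Sum>q'<Q. \<gamma> i q * \<delta> j q' * (ind (z i = q) * ind (z j = q')))"
      unfolding sum_product by (intro sum.cong refl) (simp add: mult_ac)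
    finally show "(\<Sum>i<n. \<gamma> i (z i)) * (\<Sum>j<n. \<delta> j (z j))
      = (\<Sum>i<n. \<Sum>j<n. \<Sum>q<Q. \<Sum>q'<Q. \<gamma> i q * \<delta> j q' * (ind (z i = q) * ind (z j = q')))" .
  qed
  also have "\<dots> = (\<Sum>i<n. \<Sum>j<n. \<Sum>q<Q. \<Sum>q'<Q. \<Sum>z\<in>Om. \<gamma> i q * \<delta> j q' * (ind (z i = q) * ind (z j = q')))"
    by (simp only: sum.swap[where A = Om])
  also have "\<dots> = (\<Sum>i<n. \<Sum>j<n. \<Sum>q<Q. \<Sum>q'<Q. \<gamma> i q * \<delta> j q' * (Prb n nq i j q q' * card Om))"
    by (intro sum.cong refl) (simp add: sum_distrib_left[symmetric] E12)
  finally show ?thesis by (simp add: sum_distrib_right mult.assoc)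
qed

end

definition Tst :: "nat \<Rightarrow> (nat \<Rightarrow> nat) \<Rightarrow> (nat \<Rightarrow> nat \<Rightarrow> real) \<Rightarrow> (nat \<Rightarrow> nat) \<Rightarrow> real" where
  "Tst n nq \<alpha> z = (\<Sum>i<n. \<alpha> i (z i) / real (nq (z i)))"

definition mbar :: "nat \<Rightarrow> (nat \<Rightarrow> nat \<Rightarrow> real) \<Rightarrow> nat \<Rightarrow> real" where
  "mbar n \<alpha> q = (\<Sum>i<n. \<alpha> i q) / real n"

lemma Ex_cong: "(\<And>z. z \<in> \<Omega> \<Longrightarrow> X z = Y z) \<Longrightarrow> Ex \<Omega> X = Ex \<Omega> Y"
  unfolding Ex_def by (metis (mono_tags, lifting) sum.cong)

lemma Ex_minus_const: "real (card \<Omega>) > 0 \<Longrightarrow> Ex \<Omega> (\<lambda>z. X z - c) = Ex \<Omega> X - c"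
  unfolding Ex_def by (simp add: sum_subtractf field_simps)

lemma Ex_plus_const: "real (card \<Omega>) > 0 \<Longrightarrow> Ex \<Omega> (\<lambda>z. X z + c) = Ex \<Omega> X + c"
  unfolding Ex_def by (simp add: sum.distrib field_simps)

context crfe begin

lemma ET: "Ex Om (Tst n nq \<alpha>) = (\<Sum>q<Q. mbar n \<alpha> q)"
proof -
  have "(\<Sum>z\<in>Om. Tst n nq \<alpha> z) = (\<Sum>i<n. \<Sum>q<Q. \<alpha> i q / real (nq q) * (real (nq q) / n)) * card Om"
    unfolding Tst_def by (rule EB1)
  also have "\<dots> = (\<Sum>i<n. \<Sum>q<Q. \<alpha> i q / n) * card Om"
  proof -
    have "(\<Sum>i<n. \<Sum>q<Q. \<alpha> i q / real (nq q) * (real (nq q) / n)) = (\<Sum>i<n. \<Sum>q<Q. \<alpha> i q / n)"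
    proof (intro sum.cong refl)
      fix i q assume "q \<in> {..<Q}"
      then have "real (nq q) \<noteq> 0" using nq_real_pos by force
      then show "\<alpha> i q / real (nq q) * (real (nq q) / n) = \<alpha> i q / n" by simp
    qed
    then show ?thesis by simp
  qed
  also have "(\<Sum>i<n. \<Sum>q<Q. \<alpha> i q / n) = (\<Sum>q<Q. mbar n \<alpha> q)"
    unfolding mbar_def by (subst sum.swap) (simp add: sum_divide_distrib)
  finally show ?thesis using card_Om_pos unfolding Ex_def by simp
qed

lemma count_sum:
  assumes z: "z \<in> Om"
  shows "(\<Sum>i<n. f (z i)) = (\<Sum>q<Q. real (nq q) * f q)"
proof -
  have "(\<Sum>i<n. f (z i)) = (\<Sum>i<n. \<Sum>q<Q. ind (z i = q) * f q)"
    using Om_range[OF z] delta_sum by (intro sum.cong refl) (metis lessThan_iff)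
  also have "\<dots> = (\<Sum>q<Q. (\<Sum>i<n. ind (z i = q)) * f q)"
    by (subst sum.swap) (simp add: sum_distrib_right)
  also have "\<dots> = (\<Sum>q<Q. real (nq q) * f q)"
  proof (intro sum.cong refl)
    fix q assume q: "q \<in> {..<Q}"
    have "{j \<in> {..<n}. z j = q} = {j. j < n \<and> z j = q}" by auto
    then have "(\<Sum>i<n. ind (z i = q)) = real (nq q)" using Om_card[OF z] q by (simp add: sum_ind_card)
    then show "(\<Sum>i<n. ind (z i = q)) * f q = real (nq q) * f q" by simp
  qed
  finally show ?thesis .
qed

lemma T_center:
  assumes z: "z \<in> Om"
  shows "Tst n nq (\<lambda>i q. \<alpha> i q - mbar n \<alpha> q) z = Tst n nq \<alpha> z - (\<Sum>q<Q. mbar n \<alpha> q)"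
proof -
  have "Tst n nq (\<lambda>i q. \<alpha> i q - mbar n \<alpha> q) z = Tst n nq \<alpha> z - (\<Sum>i<n. mbar n \<alpha> (z i) / real (nq (z i)))"
    unfolding Tst_def by (simp add: diff_divide_distrib sum_subtractf)
  also have "(\<Sum>i<n. mbar n \<alpha> (z i) / real (nq (z i))) = (\<Sum>q<Q. real (nq q) * (mbar n \<alpha> q / real (nq q)))"
    by (rule count_sum[OF z])
  also have "\<dots> = (\<Sum>q<Q. mbar n \<alpha> q)"
  proof (intro sum.cong refl)
    fix q assume "q \<in> {..<Q}"
    then have "real (nq q) \<noteq> 0" using nq_real_pos by force
    then show "real (nq q) * (mbar n \<alpha> q / real (nq q)) = mbar n \<alpha> q" by simp
  qed
  finally show ?thesis .
qed

lemma Cov_T: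
  assumes cb: "\<forall>i<n. (\<Sum>q<Q. \<beta> i q) = 0"
  shows "Ex Om (\<lambda>z. (Tst n nq \<alpha> z - Ex Om (Tst n nq \<alpha>)) * (Tst n nq \<beta> z - Ex Om (Tst n nq \<beta>)))
       = (\<Sum>q<Q. (1 / real (nq q)) * ((\<Sum>i<n. (\<alpha> i q - mbar n \<alpha> q) * (\<beta> i q - mbar n \<beta> q)) / (real n - 1)))"
proof -
  define \<alpha>' where "\<alpha>' i q = \<alpha> i q - mbar n \<alpha> q" for i q
  define \<beta>' where "\<beta>' i q = \<beta> i q - mbar n \<beta> q" for i q
  have n0: "real n \<noteq> 0" using n_ge by simp
  have "Ex Om (\<lambda>z. (Tst n nq \<alpha> z - Ex Om (Tst n nq \<alpha>)) * (Tst n nq \<beta> z - Ex Om (Tst n nq \<beta>)))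
      = Ex Om (\<lambda>z. Tst n nq \<alpha>' z * Tst n nq \<beta>' z)"
    by (rule Ex_cong) (simp add: ET T_center \<alpha>'_def[abs_def] \<beta>'_def[abs_def])
  also have "\<dots> = (\<Sum>i<n. \<Sum>j<n. \<Sum>q<Q. \<Sum>q'<Q. (\<alpha>' i q / nq q) * (\<beta>' j q' / nq q') * Prb n nq i j q q')"
  proof -
    have "(\<Sum>z\<in>Om. Tst n nq \<alpha>' z * Tst n nq \<beta>' z)
      = (\<Sum>i<n. \<Sum>j<n. \<Sum>q<Q. \<Sum>q'<Q. (\<alpha>' i q / nq q) * (\<beta>' j q' / nq q') * Prb n nq i j q q') * card Om"
      unfolding Tst_def by (rule EB2)
    then show ?thesis using card_Om_pos unfolding Ex_def by simp
  qed
  also have "\<dots> = (\<Sum>i<n. \<Sum>q<Q. \<alpha>' i q * \<beta>' i q / (nq q * (real n - 1)))"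
  proof (rule alg_moment)
    show "n \<ge> 2" by (rule n_ge)
    show "\<forall>q<Q. nq q \<ge> 1" by (rule nq_pos)
    show "\<forall>q<Q. (\<Sum>i<n. \<alpha>' i q) = 0"
      using n0 by (simp add: \<alpha>'_def mbar_def sum_subtractf)
    have "(\<Sum>q<Q. \<beta>' i q) = 0" if i: "i < n" for i
    proof -
      have "(\<Sum>q<Q. mbar n \<beta> q) = (\<Sum>i<n. \<Sum>q<Q. \<beta> i q) / n"
        unfolding mbar_def by (subst sum.swap) (simp add: sum_divide_distrib)
      also have "\<dots> = 0" using cb by simp
      finally show ?thesis using cb i by (simp add: \<beta>'_def sum_subtractf)
    qed
    then show "\<forall>i<n. (\<Sum>q<Q. \<beta>' i q) = 0" by blast
  qed
  also have "\<dots> = (\<Sum>q<Q. (1 / real (nq q)) * ((\<Sum>i<n. \<alpha>' i q * \<beta>' i q) / (real n - 1)))"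
    by (subst sum.swap) (simp add: sum_distrib_left sum_divide_distrib)
  finally show ?thesis by (simp add: \<alpha>'_def \<beta>'_def)
qed

end

lemma hadamard_prod:
  fixes iota :: "nat \<Rightarrow> nat \<Rightarrow> real"
  assumes iota_bij: "bij_betw (\<lambda>q. restrict (iota q) {0..<K}) {0..<2^K} ({0..<K} \<rightarrow>\<^sub>E {-1, 1})"
    and A: "A \<subseteq> {0..<K}" and A': "A' \<subseteq> {0..<K}"
  shows "(\<Sum>q<2^K. (\<Prod>k\<in>A. iota q k) * (\<Prod>k\<in>A'. iota q k))
       = (\<Prod>k\<in>{0..<K}. \<Sum>x\<in>{-1, 1::real}. (if k \<in> A then x else 1) * (if k \<in> A' then x else 1))"
proof -
  define \<Phi> where "\<Phi> s = (\<Prod>k\<in>{0..<K}. (if k \<in> A then s k else 1) * (if k \<in> A' then s k else (1::real)))" for s :: "nat \<Rightarrow> real"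
  have fA: "finite A" "finite A'" using A A' finite_subset by blast+
  have step: "(\<Prod>k\<in>A. iota q k) * (\<Prod>k\<in>A'. iota q k) = \<Phi> (restrict (iota q) {0..<K})" for q
  proof -
    have e1: "(\<Prod>k\<in>A. iota q k) = (\<Prod>k\<in>{0..<K}. if k \<in> A then iota q k else 1)"
    proof -
      have "{k \<in> {0..<K}. k \<in> A} = A" using A by auto
      then show ?thesis using prod.inter_filter[of "{0..<K}" "iota q" "\<lambda>k. k \<in> A"] by simp
    qed
    have e2: "(\<Prod>k\<in>A'. iota q k) = (\<Prod>k\<in>{0..<K}. if k \<in> A' then iota q k else 1)"
    proof -
      have "{k \<in> {0..<K}. k \<in> A'} = A'" using A' by auto
      then show ?thesis using prod.inter_filter[of "{0..<K}" "iota q" "\<lambda>k. k \<in> A'"] by simp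
    qed
    show ?thesis unfolding e1 e2 \<Phi>_def prod.distrib[symmetric] by (intro prod.cong refl) auto
  qed
  have "(\<Sum>q<2^K. (\<Prod>k\<in>A. iota q k) * (\<Prod>k\<in>A'. iota q k)) = (\<Sum>q\<in>{0..<2^K}. \<Phi> (restrict (iota q) {0..<K}))"
    using step by (simp add: atLeast0LessThan)
  also have "\<dots> = (\<Sum>s\<in>{0..<K} \<rightarrow>\<^sub>E {-1, 1}. \<Phi> s)"
    by (rule sum.reindex_bij_betw[OF iota_bij])
  also have "\<dots> = (\<Prod>k\<in>{0..<K}. \<Sum>x\<in>{-1, 1::real}. (if k \<in> A then x else 1) * (if k \<in> A' then x else 1))"
    unfolding \<Phi>_def by (rule prod_sum_PiE[symmetric]) auto
  finally show ?thesis .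
qed

locale fac =
  fixes K :: nat and iota :: "nat \<Rightarrow> nat \<Rightarrow> real" and eff :: "nat \<Rightarrow> nat set"
    and nq :: "nat \<Rightarrow> nat" and tier :: "nat \<Rightarrow> nat set" and H :: nat
  assumes K: "K \<ge> 1"
    and iota_bij: "bij_betw (\<lambda>q. restrict (iota q) {0..<K}) {0..<2^K} ({0..<K} \<rightarrow>\<^sub>E {-1, 1})"
    and eff_bij: "bij_betw eff {0..<2^K - 1} {A. A \<subseteq> {0..<K} \<and> A \<noteq> {}}"
    and nq_pos: "\<forall>q<2^K. nq q \<ge> 1"
    and tier_nonempty: "\<forall>h<H. tier h \<noteq> {}"
    and tier_disj: "\<forall>h<H. \<forall>h'<H. h \<noteq> h' \<longrightarrow> tier h \<inter> tier h' = {}"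
    and tier_cover: "(\<Union>h<H. tier h) = {0..<2^K - 1}"
begin

abbreviation F :: nat where "F \<equiv> 2^K - 1"
abbreviation "g e q \<equiv> gcoef iota eff e q"

lemma eff_in: "e < F \<Longrightarrow> eff e \<subseteq> {0..<K} \<and> eff e \<noteq> {}"
  using bij_betw_apply[OF eff_bij, of e] by auto

lemma eff_inj: "e < F \<Longrightarrow> e' < F \<Longrightarrow> eff e = eff e' \<Longrightarrow> e = e'"
  using bij_betw_imp_inj_on[OF eff_bij] by (auto simp: inj_on_def)

lemma g_orth: assumes e: "e < F" and e': "e' < F"
  shows "(\<Sum>q<2^K. g e q * g e' q) = (if e = e' then 2^K else 0)"
proof -
  have A: "eff e \<subseteq> {0..<K}" and A': "eff e' \<subseteq> {0..<K}" using eff_in e e' by auto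
  have H: "(\<Sum>q<2^K. g e q * g e' q) = (\<Prod>k\<in>{0..<K}. \<Sum>x\<in>{-1, 1::real}. (if k \<in> eff e then x else 1) * (if k \<in> eff e' then x else 1))"
    unfolding gcoef_def by (rule hadamard_prod[OF iota_bij A A'])
  show ?thesis
  proof (cases "e = e'")
    case True
    have "(\<Prod>k\<in>{0..<K}. \<Sum>x\<in>{-1, 1::real}. (if k \<in> eff e then x else 1) * (if k \<in> eff e' then x else 1))
        = (\<Prod>k\<in>{0..<K}. 2)"
      using True by (intro prod.cong refl) auto
    then show ?thesis using H True by simp
  next
    case False
    then have "eff e \<noteq> eff e'" using eff_inj e e' by blast
    then obtain k where k: "k \<in> {0..<K}" "(k \<in> eff e) \<noteq> (k \<in> eff e')" using A A' by blast
    have "(\<Sum>x\<in>{-1, 1::real}. (if k \<in> eff e then x else 1) * (if k \<in> eff e' then x else 1)) = 0"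
      using k(2) by auto
    then have "(\<Prod>k\<in>{0..<K}. \<Sum>x\<in>{-1, 1::real}. (if k \<in> eff e then x else 1) * (if k \<in> eff e' then x else 1)) = 0"
      using k by (intro prod_zero) (auto intro!: bexI[where x=k])
    then show ?thesis using H False by simp
  qed
qed

lemma g_sum: assumes e: "e < F" shows "(\<Sum>q<2^K. g e q) = 0"
proof -
  have A: "eff e \<subseteq> {0..<K}" and ne: "eff e \<noteq> {}" using eff_in e by auto
  have H: "(\<Sum>q<2^K. g e q * (\<Prod>k\<in>{}. iota q k)) = (\<Prod>k\<in>{0..<K}. \<Sum>x\<in>{-1, 1::real}. (if k \<in> eff e then x else 1) * (if k \<in> {} then x else 1))"
    unfolding gcoef_def by (rule hadamard_prod[OF iota_bij A]) auto
  obtain k where k: "k \<in> eff e" using ne by blast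
  have "(\<Sum>x\<in>{-1, 1::real}. (if k \<in> eff e then x else 1) * (if k \<in> {} then x else 1)) = 0"
    using k by auto
  then have "(\<Prod>k\<in>{0..<K}. \<Sum>x\<in>{-1, 1::real}. (if k \<in> eff e then x else 1) * (if k \<in> {} then x else 1)) = 0"
    using k A by (intro prod_zero) auto
  then show ?thesis using H by simp
qed

end

lemma mv_entry: "i < dim_row A \<Longrightarrow> dim_vec v = dim_col A \<Longrightarrow> (A *\<^sub>v v) $ i = (\<Sum>a<dim_col A. A $$ (i,a) * v $ a)"
  by (simp add: scalar_prod_def atLeast0LessThan)

lemma mm_entry: "i < dim_row A \<Longrightarrow> j < dim_col B \<Longrightarrow> dim_row B = dim_col A \<Longrightarrow>
   (A * B) $$ (i,j) = (\<Sum>a<dim_col A. A $$ (i,a) * B $$ (a,j))"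
  by (simp add: scalar_prod_def atLeast0LessThan)

lemma sum_delta_ind: "finite E \<Longrightarrow> e0 \<in> E \<Longrightarrow> (\<Sum>e\<in>E. ind (e = e0) * f e) = f e0"
proof -
  assume "finite E" "e0 \<in> E"
  moreover have "{e \<in> E. e = e0} = {e0}" using \<open>e0 \<in> E\<close> by auto
  ultimately show ?thesis by (simp add: sum_ind_mult)
qed

context fac begin

abbreviation "B \<equiv> Btil K iota eff nq"
abbreviation "w q \<equiv> 1 / (2 ^ (2 * (K - 1)) * real (nq q))"
abbreviation "c q h \<equiv> cvec K iota eff nq tier q h"

lemma w_pos: "q < 2^K \<Longrightarrow> w q > 0"
  using nq_pos by force

lemma dimB: "dim_row B = F" "dim_col B = F"
  by (simp_all add: Btil_def)

lemma Btil_entry: "e < F \<Longrightarrow> e' < F \<Longrightarrow> B $$ (e, e') = (\<Sum>q<2^K. w q * g e q * g e' q)"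
  by (simp add: Btil_def sum_distrib_left)

lemma tier_sub: "h < H \<Longrightarrow> tier h \<subseteq> {0..<F}"
  using tier_cover by blast

lemma prev_sub: "h \<le> H \<Longrightarrow> prevtiers tier h \<subseteq> {0..<F}"
  unfolding prevtiers_def
proof (rule UN_least)
  fix l assume "h \<le> H" "l \<in> {..<h}"
  then show "tier l \<subseteq> {0..<F}" using tier_sub by simp
qed

lemma prev_Suc: "prevtiers tier (Suc h) = prevtiers tier h \<union> tier h"
  unfolding prevtiers_def by (auto simp: lessThan_Suc)

lemma prev_mono: "h' \<le> h \<Longrightarrow> prevtiers tier h' \<subseteq> prevtiers tier h"
  unfolding prevtiers_def by (intro UN_mono) auto

lemma setF: "S \<subseteq> {0..<F} \<Longrightarrow> {i. i < F \<and> i \<in> S} = S"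
  by auto

lemma finS: assumes "S \<subseteq> {0..<F}" shows "finite S"
  by (rule finite_subset[OF assms]) simp

lemma pick_facts: assumes S: "S \<subseteq> {0..<F}" and a: "a < card S" shows "pick S a \<in> S \<and> pick S a < F"
proof -
  have "pick S a \<in> S" using pick_in_set[of a S] a by blast
  then show ?thesis using S by auto
qed

lemma pick_inj: assumes "S \<subseteq> {0..<F}" "a < card S" "b < card S" "pick S a = pick S b" shows "a = b"
proof (rule ccontr)
  assume "a \<noteq> b"
  then consider "a < b" | "b < a" by linarith
  then show False
  proof cases
    case 1 then show False using pick_mono[of b S a] assms by auto
  next
    case 2 then show False using pick_mono[of a S b] assms by auto
  qed
qed

lemma pick_surj: assumes S: "S \<subseteq> {0..<F}" and e: "e \<in> S" shows "\<exists>a<card S. pick S a = e"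
proof -
  have "{x \<in> S. x < e} \<subset> S" using e by auto
  then have "card {x \<in> S. x < e} < card S" using finS[OF S] by (rule psubset_card_mono[rotated])
  then show ?thesis using pick_card_in_set[OF e] by blast
qed

lemma dim_bvec: "dim_vec (bvec K iota eff q) = F"
  by (simp add: bvec_def)

lemma subvec_b_dim:
  assumes S: "S \<subseteq> {0..<F}"
  shows "dim_vec (subvec (bvec K iota eff q) S) = card S"
  unfolding subvec_def dim_bvec setF[OF S] by simp

lemma subvec_b:
  assumes S: "S \<subseteq> {0..<F}" and a: "a < card S"
  shows "subvec (bvec K iota eff q) S $ a = g (pick S a) q"
proof -
  have "subvec (bvec K iota eff q) S $ a = bvec K iota eff q $ pick S a"
    unfolding subvec_def dim_bvec setF[OF S] using a by simp
  also have "\<dots> = g (pick S a) q" unfolding bvec_def using pick_facts[OF S a] by simp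
  finally show ?thesis .
qed

lemma sub_carrier: assumes S1: "S1 \<subseteq> {0..<F}" and S2: "S2 \<subseteq> {0..<F}"
  shows "submatrix B S1 S2 \<in> carrier_mat (card S1) (card S2)"
proof (rule carrier_matI)
  show "dim_row (submatrix B S1 S2) = card S1" by (simp only: dim_submatrix dimB setF[OF S1])
  show "dim_col (submatrix B S1 S2) = card S2" by (simp only: dim_submatrix dimB setF[OF S2])
qed

lemma sub_entry:
  assumes S1: "S1 \<subseteq> {0..<F}" and S2: "S2 \<subseteq> {0..<F}" and a: "a < card S1" and b: "b < card S2"
  shows "submatrix B S1 S2 $$ (a, b) = (\<Sum>q<2^K. w q * g (pick S1 a) q * g (pick S2 b) q)"
proof -
  have "submatrix B S1 S2 $$ (a, b) = B $$ (pick S1 a, pick S2 b)"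
    by (rule submatrix_index) (simp_all only: dimB setF[OF S1] setF[OF S2] a b)
  also have "\<dots> = (\<Sum>q<2^K. w q * g (pick S1 a) q * g (pick S2 b) q)"
    using pick_facts[OF S1 a] pick_facts[OF S2 b] by (intro Btil_entry) auto
  finally show ?thesis .
qed

lemma Bpp_inv:
  assumes P: "P \<subseteq> {0..<F}"
  shows "matinv (submatrix B P P) \<in> carrier_mat (card P) (card P)
       \<and> matinv (submatrix B P P) * submatrix B P P = 1\<^sub>m (card P)"
proof -
  define p where "p = card P"
  define A where "A = submatrix B P P"
  have Ac: "A \<in> carrier_mat p p" unfolding A_def p_def using sub_carrier[OF P P] .
  define G where "G a q = g (pick P a) q" for a q
  have Aent: "A $$ (b, a) = (\<Sum>q<2^K. w q * G b q * G a q)" if "b < p" "a < p" for a b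
    unfolding A_def G_def using sub_entry[OF P P] that unfolding p_def by blast
  have det: "det A \<noteq> 0"
  proof
    assume "det A = 0"
    then have "\<exists>v. v \<in> carrier_vec p \<and> v \<noteq> 0\<^sub>v p \<and> A *\<^sub>v v = 0\<^sub>v p"
      by (rule iffD1[OF det_0_iff_vec_prod_zero_field[OF Ac]])
    then obtain v where v: "v \<in> carrier_vec p" "v \<noteq> 0\<^sub>v p" "A *\<^sub>v v = 0\<^sub>v p"
      by (elim exE conjE)
    define s where "s q = (\<Sum>a<p. v $ a * G a q)" for q
    have row0: "(\<Sum>a<p. A $$ (b, a) * v $ a) = 0" if b: "b < p" for b
    proof -
      have "(A *\<^sub>v v) $ b = 0" using v(3) b by simp
      then show ?thesis using mv_entry[of b A v] Ac v(1) b by simp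
    qed
    have "(\<Sum>b<p. v $ b * (\<Sum>a<p. A $$ (b, a) * v $ a)) = 0" using row0 by simp
    moreover have "(\<Sum>b<p. v $ b * (\<Sum>a<p. A $$ (b, a) * v $ a)) = (\<Sum>q<2^K. w q * (s q)\<^sup>2)"
    proof -
      have "(\<Sum>b<p. v $ b * (\<Sum>a<p. A $$ (b, a) * v $ a))
          = (\<Sum>b<p. \<Sum>a<p. \<Sum>q<2^K. w q * (v $ b * G b q) * (v $ a * G a q))"
      proof (rule sum.cong[OF refl])
        fix b assume b: "b \<in> {..<p}"
        have "v $ b * (\<Sum>a<p. A $$ (b, a) * v $ a) = (\<Sum>a<p. v $ b * (A $$ (b, a) * v $ a))"
          by (rule sum_distrib_left)
        also have "\<dots> = (\<Sum>a<p. \<Sum>q<2^K. w q * (v $ b * G b q) * (v $ a * G a q))"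
        proof (rule sum.cong[OF refl])
          fix a assume a: "a \<in> {..<p}"
          have "v $ b * (A $$ (b, a) * v $ a) = v $ b * ((\<Sum>q<2^K. w q * G b q * G a q) * v $ a)"
            using Aent a b by simp
          also have "\<dots> = (\<Sum>q<2^K. v $ b * (w q * G b q * G a q * v $ a))"
            by (simp add: sum_distrib_left sum_distrib_right)
          also have "\<dots> = (\<Sum>q<2^K. w q * (v $ b * G b q) * (v $ a * G a q))"
            by (rule sum.cong[OF refl]) (simp add: mult_ac)
          finally show "v $ b * (A $$ (b, a) * v $ a) = (\<Sum>q<2^K. w q * (v $ b * G b q) * (v $ a * G a q))" .
        qed
        finally show "v $ b * (\<Sum>a<p. A $$ (b, a) * v $ a) = (\<Sum>a<p. \<Sum>q<2^K. w q * (v $ b * G b q) * (v $ a * G a q))" .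
      qed
      also have "\<dots> = (\<Sum>b<p. \<Sum>q<2^K. \<Sum>a<p. w q * (v $ b * G b q) * (v $ a * G a q))"
        by (rule sum.cong[OF refl], rule sum.swap)
      also have "\<dots> = (\<Sum>q<2^K. \<Sum>b<p. \<Sum>a<p. w q * (v $ b * G b q) * (v $ a * G a q))"
        by (rule sum.swap)
      also have "\<dots> = (\<Sum>q<2^K. w q * (s q)\<^sup>2)"
      proof (rule sum.cong[OF refl])
        fix q
        have "w q * (s q)\<^sup>2 = w q * ((\<Sum>b<p. v $ b * G b q) * (\<Sum>a<p. v $ a * G a q))"
          unfolding s_def power2_eq_square by simp
        also have "\<dots> = w q * (\<Sum>b<p. \<Sum>a<p. (v $ b * G b q) * (v $ a * G a q))"
          by (simp only: sum_product)
        also have "\<dots> = (\<Sum>b<p. \<Sum>a<p. w q * (v $ b * G b q) * (v $ a * G a q))"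
          by (simp only: sum_distrib_left mult.assoc)
        finally show "(\<Sum>b<p. \<Sum>a<p. w q * (v $ b * G b q) * (v $ a * G a q)) = w q * (s q)\<^sup>2" by simp
      qed
      finally show ?thesis .
    qed
    ultimately have "(\<Sum>q<2^K. w q * (s q)\<^sup>2) = 0" by simp
    then have "\<forall>q\<in>{..<2^K}. w q * (s q)\<^sup>2 = 0"
      using w_pos by (subst sum_nonneg_eq_0_iff[symmetric]) (auto intro: mult_nonneg_nonneg less_imp_le)
    then have s0: "s q = 0" if "q < 2^K" for q using w_pos[OF that] that by auto
    have "v = 0\<^sub>v p"
    proof (rule eq_vecI)
      show "dim_vec v = dim_vec (0\<^sub>v p)" using v(1) by simp
      fix b assume "b < dim_vec (0\<^sub>v p)"
      then have b: "b < p" by simp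
      have "0 = (\<Sum>q<2^K. s q * G b q)" using s0 by simp
      also have "\<dots> = (\<Sum>q<2^K. \<Sum>a<p. v $ a * (G a q * G b q))"
        unfolding s_def by (simp only: sum_distrib_right mult.assoc)
      also have "\<dots> = (\<Sum>a<p. \<Sum>q<2^K. v $ a * (G a q * G b q))"
        by (rule sum.swap)
      also have "\<dots> = (\<Sum>a<p. v $ a * (\<Sum>q<2^K. G a q * G b q))"
        by (simp only: sum_distrib_left)
      also have "\<dots> = (\<Sum>a<p. v $ a * (if a = b then 2^K else 0))"
      proof (intro sum.cong refl)
        fix a assume "a \<in> {..<p}"
        then have a: "a < p" by simp
        have "(\<Sum>q<2^K. G a q * G b q) = (if pick P a = pick P b then 2^K else 0)"
          unfolding G_def using g_orth pick_facts[OF P] a b p_def by simp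
        also have "\<dots> = (if a = b then 2^K else 0)" using pick_inj[OF P] a b p_def by auto
        finally show "v $ a * (\<Sum>q<2^K. G a q * G b q) = v $ a * (if a = b then 2^K else 0)" by simp
      qed
      also have "\<dots> = v $ b * 2^K" using b by (simp add: if_distrib cong: if_cong)
      finally show "v $ b = 0\<^sub>v p $ b" using b by simp
    qed
    then show False using v(2) by simp
  qed
  have U: "A \<in> Units (ring_mat TYPE(real) p ())" by (rule det_non_zero_imp_unit[OF Ac det])
  have "mat_inverse A \<noteq> None"
  proof
    assume "mat_inverse A = None"
    from mat_inverse(1)[OF Ac this, of "()"] U show False by simp
  qed
  then obtain Bi where Bi: "mat_inverse A = Some Bi" by auto
  from mat_inverse(2)[OF Ac Bi] have "A * Bi = 1\<^sub>m p \<and> Bi * A = 1\<^sub>m p \<and> Bi \<in> carrier_mat p p" .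
  moreover have "matinv A = Bi" by (simp add: matinv_def Bi)
  ultimately show ?thesis unfolding A_def p_def by simp
qed

end

lemma mv_entry': "X \<in> carrier_mat t p \<Longrightarrow> r < t \<Longrightarrow> dim_vec v = p \<Longrightarrow>
   (X *\<^sub>v v) $ r = (\<Sum>a<p. X $$ (r, a) * v $ a)"
  using mv_entry[of r X v] by auto

lemma mm_entry': "X \<in> carrier_mat t p \<Longrightarrow> Y \<in> carrier_mat p s \<Longrightarrow> r < t \<Longrightarrow> j < s \<Longrightarrow>
   (X * Y) $$ (r, j) = (\<Sum>a<p. X $$ (r, a) * Y $$ (a, j))"
  using mm_entry[of r X j Y] by auto

context fac begin

abbreviation "P h \<equiv> prevtiers tier h"
abbreviation "M h \<equiv> submatrix B (tier h) (P h) * matinv (submatrix B (P h) (P h))"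

lemma P_sub: "h < H \<Longrightarrow> P h \<subseteq> {0..<F}" using prev_sub by simp
lemma PS_sub: "h < H \<Longrightarrow> P (Suc h) \<subseteq> {0..<F}" using prev_sub by simp

lemma M_carrier: assumes h: "h < H" shows "M h \<in> carrier_mat (card (tier h)) (card (P h))"
proof -
  have "matinv (submatrix B (P h) (P h)) \<in> carrier_mat (card (P h)) (card (P h))"
    using Bpp_inv[OF P_sub[OF h]] by blast
  then show ?thesis using sub_carrier[OF tier_sub[OF h] P_sub[OF h]] by (rule mult_carrier_mat[rotated])
qed

lemma c_dim: assumes h: "h < H" shows "dim_vec (c q h) = card (tier h)"
proof (cases "h = 0")
  case True
  then show ?thesis unfolding cvec_def using subvec_b_dim[OF tier_sub[OF h]] by simp
next
  case False
  then show ?thesis unfolding cvec_def using M_carrier[OF h] sub_carrier[OF tier_sub[OF h] P_sub[OF h]] by simp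
qed

lemma c_entry0: assumes h: "0 < H" and r: "r < card (tier 0)" shows "c q 0 $ r = g (pick (tier 0) r) q"
  unfolding cvec_def using subvec_b[OF tier_sub[OF h] r] by simp

lemma c_entry:
  assumes h0: "0 < h" and h: "h < H" and r: "r < card (tier h)"
  shows "c q h $ r = g (pick (tier h) r) q - (\<Sum>a<card (P h). M h $$ (r, a) * g (pick (P h) a) q)"
proof -
  have Mc: "M h \<in> carrier_mat (card (tier h)) (card (P h))" by (rule M_carrier[OF h])
  define v where "v = subvec (bvec K iota eff q) (P h)"
  have dv: "dim_vec v = card (P h)" unfolding v_def by (rule subvec_b_dim[OF P_sub[OF h]])
  have "c q h $ r = subvec (bvec K iota eff q) (tier h) $ r - (M h *\<^sub>v v) $ r"
    unfolding cvec_def v_def using h0 r Mc sub_carrier[OF tier_sub[OF h] P_sub[OF h]] by simp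
  also have "subvec (bvec K iota eff q) (tier h) $ r = g (pick (tier h) r) q"
    by (rule subvec_b[OF tier_sub[OF h] r])
  also have "(M h *\<^sub>v v) $ r = (\<Sum>a<card (P h). M h $$ (r, a) * v $ a)"
    by (rule mv_entry'[OF Mc r dv])
  also have "\<dots> = (\<Sum>a<card (P h). M h $$ (r, a) * g (pick (P h) a) q)"
    unfolding v_def using subvec_b[OF P_sub[OF h]] by simp
  finally show ?thesis .
qed

lemma c_span:
  assumes h: "h < H" and r: "r < card (tier h)"
  shows "\<exists>co. \<forall>q. c q h $ r = (\<Sum>e\<in>P (Suc h). co e * g e q)"
proof -
  have fin: "finite (P (Suc h))" by (rule finS[OF PS_sub[OF h]])
  have e0: "pick (tier h) r \<in> P (Suc h)"
    using pick_facts[OF tier_sub[OF h] r] prev_Suc by auto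
  show ?thesis
  proof (cases "h = 0")
    case True
    show ?thesis
    proof (intro exI allI)
      fix q
      show "c q h $ r = (\<Sum>e\<in>P (Suc h). ind (e = pick (tier h) r) * g e q)"
        using c_entry0[of r q] True h r sum_delta_ind[OF fin e0] by simp
    qed
  next
    case False
    define co where "co e = ind (e = pick (tier h) r) - (\<Sum>a<card (P h). M h $$ (r, a) * ind (e = pick (P h) a))" for e
    show ?thesis
    proof (intro exI allI)
      fix q
      have ea: "pick (P h) a \<in> P (Suc h)" if "a < card (P h)" for a
        using pick_facts[OF P_sub[OF h] that] prev_Suc by auto
      have "(\<Sum>e\<in>P (Suc h). co e * g e q)
          = (\<Sum>e\<in>P (Suc h). ind (e = pick (tier h) r) * g e q)
            - (\<Sum>e\<in>P (Suc h). \<Sum>a<card (P h). M h $$ (r, a) * (ind (e = pick (P h) a) * g e q))"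
        unfolding co_def by (simp add: left_diff_distrib sum_subtractf sum_distrib_right mult.assoc)
      also have "(\<Sum>e\<in>P (Suc h). \<Sum>a<card (P h). M h $$ (r, a) * (ind (e = pick (P h) a) * g e q))
          = (\<Sum>a<card (P h). M h $$ (r, a) * (\<Sum>e\<in>P (Suc h). ind (e = pick (P h) a) * g e q))"
        by (subst sum.swap) (simp add: sum_distrib_left)
      also have "\<dots> = (\<Sum>a<card (P h). M h $$ (r, a) * g (pick (P h) a) q)"
        using sum_delta_ind[OF fin ea] by simp
      also have "(\<Sum>e\<in>P (Suc h). ind (e = pick (tier h) r) * g e q) = g (pick (tier h) r) q"
        by (rule sum_delta_ind[OF fin e0])
      finally show "c q h $ r = (\<Sum>e\<in>P (Suc h). co e * g e q)"
        using c_entry[of h r q] False h r by simp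
    qed
  qed
qed

lemma c_sum:
  assumes h: "h < H" and r: "r < card (tier h)"
  shows "(\<Sum>q<2^K. c q h $ r) = 0"
proof -
  obtain co where l: "\<forall>q. c q h $ r = (\<Sum>e\<in>P (Suc h). co e * g e q)" using c_span[OF h r] by blast
  have "(\<Sum>q<2^K. c q h $ r) = (\<Sum>q<2^K. \<Sum>e\<in>P (Suc h). co e * g e q)" using l by simp
  also have "\<dots> = (\<Sum>e\<in>P (Suc h). co e * (\<Sum>q<2^K. g e q))"
    by (subst sum.swap) (simp add: sum_distrib_left)
  also have "\<dots> = 0"
  proof (rule sum.neutral, rule ballI)
    fix e assume "e \<in> P (Suc h)"
    then have "e < F" using PS_sub[OF h] by auto
    then show "co e * (\<Sum>q<2^K. g e q) = 0" using g_sum by simp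
  qed
  finally show ?thesis .
qed

lemma c_orth_prev:
  assumes h0: "0 < h" and h: "h < H" and r: "r < card (tier h)" and e: "e \<in> P h"
  shows "(\<Sum>q<2^K. w q * c q h $ r * g e q) = 0"
proof -
  define T where "T = tier h"
  define PP where "PP = P h"
  define p where "p = card PP"
  define Bi where "Bi = matinv (submatrix B PP PP)"
  define Btp where "Btp = submatrix B T PP"
  define Bpp where "Bpp = submatrix B PP PP"
  have T: "T \<subseteq> {0..<F}" unfolding T_def by (rule tier_sub[OF h])
  have PPs: "PP \<subseteq> {0..<F}" unfolding PP_def by (rule P_sub[OF h])
  have Bi: "Bi \<in> carrier_mat p p" "Bi * Bpp = 1\<^sub>m p"
    using Bpp_inv[OF PPs] unfolding Bi_def Bpp_def p_def by auto
  have Btpc: "Btp \<in> carrier_mat (card T) p" unfolding Btp_def p_def by (rule sub_carrier[OF T PPs])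
  have Bppc: "Bpp \<in> carrier_mat p p" unfolding Bpp_def p_def by (rule sub_carrier[OF PPs PPs])
  have Mdef: "M h = Btp * Bi" unfolding Btp_def Bi_def T_def PP_def by simp
  have MB: "M h * Bpp = Btp"
  proof -
    have "M h * Bpp = Btp * (Bi * Bpp)" unfolding Mdef using Btpc Bi(1) Bppc by (rule assoc_mult_mat)
    then show ?thesis using Bi(2) Btpc by simp
  qed
  have rT: "r < card T" using r T_def by simp
  obtain a0 where a0: "a0 < p" "pick PP a0 = e" using pick_surj[OF PPs] e unfolding PP_def p_def by blast
  have Mc: "M h \<in> carrier_mat (card T) p" using M_carrier[OF h] unfolding T_def p_def PP_def .
  have "(\<Sum>q<2^K. w q * c q h $ r * g e q)
      = (\<Sum>q<2^K. w q * g (pick T r) q * g e q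
           - (\<Sum>a<p. M h $$ (r, a) * (w q * g (pick PP a) q * g e q)))"
  proof (rule sum.cong[OF refl])
    fix q
    have "c q h $ r = g (pick T r) q - (\<Sum>a<p. M h $$ (r, a) * g (pick PP a) q)"
      using c_entry[OF h0 h r] unfolding T_def PP_def p_def .
    then show "w q * c q h $ r * g e q = w q * g (pick T r) q * g e q
           - (\<Sum>a<p. M h $$ (r, a) * (w q * g (pick PP a) q * g e q))"
      by (simp add: right_diff_distrib left_diff_distrib sum_distrib_left sum_distrib_right mult_ac)
  qed
  also have "\<dots> = (\<Sum>q<2^K. w q * g (pick T r) q * g e q)
      - (\<Sum>a<p. M h $$ (r, a) * (\<Sum>q<2^K. w q * g (pick PP a) q * g e q))"
    by (simp add: sum_subtractf sum_distrib_left sum.swap[of _ "{..<2^K}"])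
  also have "(\<Sum>q<2^K. w q * g (pick T r) q * g e q) = Btp $$ (r, a0)"
    unfolding Btp_def using sub_entry[OF T PPs rT a0(1)[unfolded p_def]] a0(2) by simp
  also have "(\<Sum>a<p. M h $$ (r, a) * (\<Sum>q<2^K. w q * g (pick PP a) q * g e q))
      = (\<Sum>a<p. M h $$ (r, a) * Bpp $$ (a, a0))"
    unfolding Bpp_def using sub_entry[OF PPs PPs _ a0(1)[unfolded p_def]] a0(2) p_def by simp
  also have "\<dots> = (M h * Bpp) $$ (r, a0)"
    by (rule mm_entry'[OF Mc Bppc rT a0(1), symmetric])
  also have "\<dots> = Btp $$ (r, a0)" using MB by simp
  finally show ?thesis by simp
qed

lemma c_orth:
  assumes hh: "h' < h" and h: "h < H" and r: "r < card (tier h)" and r': "r' < card (tier h')"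
  shows "(\<Sum>q<2^K. w q * c q h $ r * c q h' $ r') = 0"
proof -
  have h': "h' < H" using hh h by simp
  obtain co where l: "\<forall>q. c q h' $ r' = (\<Sum>e\<in>P (Suc h'). co e * g e q)" using c_span[OF h' r'] by blast
  have sub: "P (Suc h') \<subseteq> P h" using prev_mono hh by simp
  have "(\<Sum>q<2^K. w q * c q h $ r * c q h' $ r') = (\<Sum>q<2^K. \<Sum>e\<in>P (Suc h'). co e * (w q * c q h $ r * g e q))"
  proof (rule sum.cong[OF refl])
    fix q
    have "w q * c q h $ r * c q h' $ r' = (w q * c q h $ r) * (\<Sum>e\<in>P (Suc h'). co e * g e q)"
      by (simp only: l mult.assoc)
    also have "\<dots> = (\<Sum>e\<in>P (Suc h'). (w q * c q h $ r) * (co e * g e q))" by (rule sum_distrib_left)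
    also have "\<dots> = (\<Sum>e\<in>P (Suc h'). co e * (w q * c q h $ r * g e q))"
      by (rule sum.cong[OF refl]) (simp only: mult_ac)
    finally show "w q * c q h $ r * c q h' $ r' = (\<Sum>e\<in>P (Suc h'). co e * (w q * c q h $ r * g e q))" .
  qed
  also have "\<dots> = (\<Sum>e\<in>P (Suc h'). co e * (\<Sum>q<2^K. w q * c q h $ r * g e q))"
    by (subst sum.swap) (simp add: sum_distrib_left)
  also have "\<dots> = 0"
  proof (rule sum.neutral, rule ballI)
    fix e assume "e \<in> P (Suc h')"
    then have "e \<in> P h" using sub by auto
    then show "co e * (\<Sum>q<2^K. w q * c q h $ r * g e q) = 0"
      using c_orth_prev[OF _ h r] hh by simp
  qed
  finally show ?thesis .
qed

end

context crfe begin

lemma group_conv: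
  fixes \<phi> :: "nat \<Rightarrow> nat \<Rightarrow> real"
  assumes z: "z \<in> Om"
  shows "(\<Sum>q<Q. (\<Sum>i\<in>{i. i < n \<and> z i = q}. \<phi> i q)) = (\<Sum>i<n. \<phi> i (z i))"
proof -
  have "(\<Sum>q<Q. (\<Sum>i\<in>{i. i < n \<and> z i = q}. \<phi> i q)) = (\<Sum>q<Q. \<Sum>i<n. ind (z i = q) * \<phi> i q)"
  proof (rule sum.cong[OF refl])
    fix q
    have "{i. i < n \<and> z i = q} = {i \<in> {..<n}. z i = q}" by auto
    then show "(\<Sum>i\<in>{i. i < n \<and> z i = q}. \<phi> i q) = (\<Sum>i<n. ind (z i = q) * \<phi> i q)"
      by (simp add: sum_ind_mult)
  qed
  also have "\<dots> = (\<Sum>i<n. \<Sum>q<Q. ind (z i = q) * \<phi> i q)" by (rule sum.swap)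
  also have "\<dots> = (\<Sum>i<n. \<phi> i (z i))"
  proof (rule sum.cong[OF refl])
    fix i assume "i \<in> {..<n}"
    then have "z i < Q" using Om_range[OF z] by simp
    then show "(\<Sum>q<Q. ind (z i = q) * \<phi> i q) = \<phi> i (z i)" using delta_sum[of "z i" Q "\<phi> i"] by simp
  qed
  finally show ?thesis .
qed

lemma Yhat_lin:
  assumes z: "z \<in> Om"
  shows "(\<Sum>q<Q. u q * Yhat n nq y z q) = Tst n nq (\<lambda>i q. u q * y i q) z"
proof -
  have "(\<Sum>q<Q. u q * Yhat n nq y z q) = (\<Sum>q<Q. (\<Sum>i\<in>{i. i < n \<and> z i = q}. u q * y i q / real (nq q)))"
  proof (rule sum.cong[OF refl])
    fix q
    have "(\<Sum>i\<in>{i. i < n \<and> z i = q}. y i (z i)) = (\<Sum>i\<in>{i. i < n \<and> z i = q}. y i q)"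
      by (rule sum.cong) auto
    then show "u q * Yhat n nq y z q = (\<Sum>i\<in>{i. i < n \<and> z i = q}. u q * y i q / real (nq q))"
      unfolding Yhat_def by (simp add: sum_distrib_left sum_divide_distrib)
  qed
  also have "\<dots> = (\<Sum>i<n. u (z i) * y i (z i) / real (nq (z i)))"
    by (rule group_conv[OF z])
  finally show ?thesis unfolding Tst_def .
qed

lemma xhat_entry: "l < L \<Longrightarrow> xhat n L nq x z q $ l = Yhat n nq (\<lambda>i q. x i l) z q"
  by (simp add: xhat_def Yhat_def)

lemma mbar_lin: "mbar n (\<lambda>i q. u q * y i q) q = u q * Ybar n y q"
  unfolding mbar_def Ybar_def by (simp add: sum_distrib_left)

lemma Cov_lin:
  assumes vs: "(\<Sum>q<Q. v q) = 0"
  shows "Ex Om (\<lambda>z. (Tst n nq (\<lambda>i q. u q * y i q) z - Ex Om (Tst n nq (\<lambda>i q. u q * y i q)))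
                 * (Tst n nq (\<lambda>i q. v q * x2 i) z - Ex Om (Tst n nq (\<lambda>i q. v q * x2 i))))
    = (\<Sum>q<Q. (1 / real (nq q)) * (u q * v q) *
        ((\<Sum>i<n. (y i q - Ybar n y q) * (x2 i - (\<Sum>i<n. x2 i) / real n)) / (real n - 1)))"
proof -
  have cb: "\<forall>i<n. (\<Sum>q<Q. v q * x2 i) = 0" using vs by (simp add: sum_distrib_right[symmetric])
  have mb2: "mbar n (\<lambda>i q. v q * x2 i) q = v q * ((\<Sum>i<n. x2 i) / real n)" for q
    unfolding mbar_def by (simp add: sum_distrib_left)
  show ?thesis unfolding Cov_T[OF cb]
  proof (rule sum.cong[OF refl])
    fix q
    have "(\<Sum>i<n. (u q * y i q - mbar n (\<lambda>i q. u q * y i q) q) * (v q * x2 i - mbar n (\<lambda>i q. v q * x2 i) q))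
        = (u q * v q) * (\<Sum>i<n. (y i q - Ybar n y q) * (x2 i - (\<Sum>i<n. x2 i) / real n))"
    proof -
      have key: "\<And>yy a xx b. (u q * yy - u q * a) * (v q * xx - v q * b) = (u q * v q) * ((yy - a) * (xx - b))"
        by (simp add: algebra_simps)
      have m1: "mbar n (\<lambda>i q. u q * y i q) q = u q * Ybar n y q" by (rule mbar_lin)
      show ?thesis by (simp only: m1 mb2 key sum_distrib_left)
    qed
    then show "1 / real (nq q) *
         ((\<Sum>i<n. (u q * y i q - mbar n (\<lambda>i q. u q * y i q) q) * (v q * x2 i - mbar n (\<lambda>i q. v q * x2 i) q)) / (real n - 1))
       = 1 / real (nq q) * (u q * v q) * ((\<Sum>i<n. (y i q - Ybar n y q) * (x2 i - (\<Sum>i<n. x2 i) / real n)) / (real n - 1))"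
      by simp
  qed
qed

end

locale full = crfe n "2^K" nq + fac K iota eff nq tier H
  for n K nq iota eff tier H
begin

lemma pow2: "(2::real) ^ (2 * (K - 1)) = 2 ^ (K - 1) * 2 ^ (K - 1)"
  by (simp add: mult_2 power_add)

lemma dim_tau: "dim_vec (tau K iota eff n Y) = F"
  by (simp add: tau_def vsum_def)

lemma dim_tauhat: "dim_vec (tauhat K iota eff n nq Y z) = F"
  by (simp add: tauhat_def vsum_def)

lemma dim_theta: "dim_vec (thetahat K iota eff n L nq tier x h z) = card (tier h) * L"
  by (simp add: thetahat_def vsum_def)

lemma tau_entry:
  assumes f: "f < F" and z: "z \<in> Om"
  shows "(tauhat K iota eff n nq Y z - tau K iota eff n Y) $ f
       = Tst n nq (\<lambda>i q. (g f q / 2^(K-1)) * Y i q) z - (\<Sum>q<2^K. mbar n (\<lambda>i q. (g f q / 2^(K-1)) * Y i q) q)"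
proof -
  have "(tauhat K iota eff n nq Y z - tau K iota eff n Y) $ f = tauhat K iota eff n nq Y z $ f - tau K iota eff n Y $ f"
    using f dim_tau by simp
  also have "tauhat K iota eff n nq Y z $ f = (\<Sum>q<2^K. (g f q / 2^(K-1)) * Yhat n nq Y z q)"
    unfolding tauhat_def vsum_def using f by (simp add: dim_bvec bvec_def mult.commute)
  also have "\<dots> = Tst n nq (\<lambda>i q. (g f q / 2^(K-1)) * Y i q) z" by (rule Yhat_lin[OF z])
  also have "tau K iota eff n Y $ f = (\<Sum>q<2^K. mbar n (\<lambda>i q. (g f q / 2^(K-1)) * Y i q) q)"
    unfolding tau_def vsum_def mbar_lin using f by (simp add: dim_bvec bvec_def mult.commute)
  finally show ?thesis .
qed

lemma theta_entry:
  assumes h: "h < H" and j: "j < card (tier h) * L" and z: "z \<in> Om"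
  shows "thetahat K iota eff n L nq tier x h z $ j
       = Tst n nq (\<lambda>i q. (c q h $ (j div L) / 2^(K-1)) * x i (j mod L)) z"
proof -
  have L: "L > 0" using j by (cases L) auto
  have jm: "j mod L < L" using L by simp
  have jd: "j div L < card (tier h)" using j by (simp add: less_mult_imp_div_less)
  have "thetahat K iota eff n L nq tier x h z $ j
      = (\<Sum>q<2^K. (c q h $ (j div L) / 2^(K-1)) * (xhat n L nq x z q $ (j mod L)))"
    unfolding thetahat_def vsum_def using j c_dim[OF h]
    by (simp add: kronv_def xhat_def)
  also have "\<dots> = (\<Sum>q<2^K. (c q h $ (j div L) / 2^(K-1)) * Yhat n nq (\<lambda>i q. x i (j mod L)) z q)"
    using xhat_entry[OF jm] by simp
  also have "\<dots> = Tst n nq (\<lambda>i q. (c q h $ (j div L) / 2^(K-1)) * x i (j mod L)) z"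
    by (rule Yhat_lin[OF z])
  finally show ?thesis .
qed

lemma csum_scaled:
  assumes h: "h < H" and r: "r < card (tier h)"
  shows "(\<Sum>q<2^K. c q h $ r / 2^(K-1)) = 0"
  using c_sum[OF h r] by (simp add: sum_divide_distrib[symmetric])

lemma theta_mean:
  assumes h: "h < H" and j: "j < card (tier h) * L"
  shows "Ex Om (\<lambda>z. thetahat K iota eff n L nq tier x h z $ j) = 0"
proof -
  have jd: "j div L < card (tier h)" using j by (simp add: less_mult_imp_div_less)
  have "Ex Om (\<lambda>z. thetahat K iota eff n L nq tier x h z $ j)
      = Ex Om (Tst n nq (\<lambda>i q. (c q h $ (j div L) / 2^(K-1)) * x i (j mod L)))"
    by (rule Ex_cong) (simp add: theta_entry[OF h j])
  also have "\<dots> = (\<Sum>q<2^K. (c q h $ (j div L) / 2^(K-1)) * Ybar n (\<lambda>i q. x i (j mod L)) q)"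
    by (simp only: ET mbar_lin)
  also have "\<dots> = (\<Sum>q<2^K. c q h $ (j div L) / 2^(K-1)) * ((\<Sum>i<n. x i (j mod L)) / real n)"
  proof -
    have yq: "\<And>q. Ybar n (\<lambda>i q. x i (j mod L)) q = (\<Sum>i<n. x i (j mod L)) / real n" by (simp add: Ybar_def)
    show ?thesis by (simp only: yq sum_distrib_right)
  qed
  also have "\<dots> = 0" using csum_scaled[OF h jd] by simp
  finally show ?thesis .
qed

lemma tau_mean:
  assumes f: "f < F"
  shows "Ex Om (\<lambda>z. (tauhat K iota eff n nq Y z - tau K iota eff n Y) $ f) = 0"
proof -
  have "Ex Om (\<lambda>z. (tauhat K iota eff n nq Y z - tau K iota eff n Y) $ f)
      = Ex Om (\<lambda>z. Tst n nq (\<lambda>i q. (g f q / 2^(K-1)) * Y i q) z - (\<Sum>q<2^K. mbar n (\<lambda>i q. (g f q / 2^(K-1)) * Y i q) q))"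
    by (rule Ex_cong) (simp add: tau_entry[OF f])
  also have "\<dots> = 0" using card_Om_pos by (simp add: Ex_minus_const ET)
  finally show ?thesis .
qed

end

lemma Cov_entry: "i < d1 \<Longrightarrow> j < d2 \<Longrightarrow> Cov \<Omega> d1 d2 X V $$ (i, j)
   = Ex \<Omega> (\<lambda>z. (X z $ i - Ex \<Omega> (\<lambda>w. X w $ i)) * (V z $ j - Ex \<Omega> (\<lambda>w. V w $ j)))"
  by (simp add: Cov_def)

lemma Sqx_entry: "l < L \<Longrightarrow> Sqx n L Y x q $$ (0, l)
   = (\<Sum>i<n. (Y i q - Ybar n Y q) * (x i l - xbar n x l)) / (real n - 1)"
  by (simp add: Sqx_def)

lemma Sxx_entry: "l1 < L \<Longrightarrow> l2 < L \<Longrightarrow> Sxx n L x $$ (l1, l2)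
   = (\<Sum>i<n. (x i l1 - xbar n x l1) * (x i l2 - xbar n x l2)) / (real n - 1)"
  by (simp add: Sxx_def)

context full begin

lemma Wtx_entry:
  assumes h: "h < H" and f: "f < F" and j: "j < card (tier h) * L"
  shows "W_taux K iota eff n L nq tier Y x h $$ (f, j)
     = (\<Sum>q<2^K. (1 / (2 ^ (2 * (K - 1)) * real (nq q))) * (g f q * c q h $ (j div L) * Sqx n L Y x q $$ (0, j mod L)))"
proof -
  have L: "L > 0" using j by (cases L) auto
  have jd: "j div L < card (tier h)" using j by (simp add: less_mult_imp_div_less)
  have jm: "j mod L < L" using L by simp
  have dS: "dim_row (Sqx n L Y x q) = 1" "dim_col (Sqx n L Y x q) = L" for q by (simp_all add: Sqx_def)
  have ent: "kron (outer (bvec K iota eff q) (c q h)) (Sqx n L Y x q) $$ (f, j)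
      = g f q * c q h $ (j div L) * Sqx n L Y x q $$ (0, j mod L)" for q
    using f j jd jm c_dim[OF h, of q] by (simp add: kron_def outer_def dS dim_bvec bvec_def)
  have dk: "dim_row (kron (outer (bvec K iota eff q) (c q h)) (Sqx n L Y x q)) = F"
     "dim_col (kron (outer (bvec K iota eff q) (c q h)) (Sqx n L Y x q)) = card (tier h) * L" for q
    using c_dim[OF h, of q] by (simp_all add: kron_def outer_def dS dim_bvec)
  show ?thesis unfolding W_taux_def msum_def using f j dk ent by simp
qed

lemma Wxx_entry:
  assumes h: "h < H" and j1: "j1 < card (tier h) * L" and j2: "j2 < card (tier h) * L"
  shows "W_xx K iota eff n L nq tier x h $$ (j1, j2)
     = (\<Sum>q<2^K. (1 / (2 ^ (2 * (K - 1)) * real (nq q))) * (c q h $ (j1 div L) * c q h $ (j2 div L) * Sxx n L x $$ (j1 mod L, j2 mod L)))"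
proof -
  have L: "L > 0" using j1 by (cases L) auto
  have jd: "j1 div L < card (tier h)" "j2 div L < card (tier h)" using j1 j2 by (simp_all add: less_mult_imp_div_less)
  have jm: "j1 mod L < L" "j2 mod L < L" using L by simp_all
  have dS: "dim_row (Sxx n L x) = L" "dim_col (Sxx n L x) = L" by (simp_all add: Sxx_def)
  have ent: "kron (outer (c q h) (c q h)) (Sxx n L x) $$ (j1, j2)
      = c q h $ (j1 div L) * c q h $ (j2 div L) * Sxx n L x $$ (j1 mod L, j2 mod L)" for q
    using j1 j2 jd jm c_dim[OF h, of q] by (simp add: kron_def outer_def dS)
  have dk: "dim_row (kron (outer (c q h) (c q h)) (Sxx n L x)) = card (tier h) * L"
     "dim_col (kron (outer (c q h) (c q h)) (Sxx n L x)) = card (tier h) * L" for q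
    using c_dim[OF h, of q] by (simp_all add: kron_def outer_def dS)
  show ?thesis unfolding W_xx_def msum_def using j1 j2 dk ent by simp
qed

lemma tau_center:
  assumes f: "f < F" and z: "z \<in> Om"
  shows "(tauhat K iota eff n nq Y z - tau K iota eff n Y) $ f - Ex Om (\<lambda>w. (tauhat K iota eff n nq Y w - tau K iota eff n Y) $ f)
     = Tst n nq (\<lambda>i q. (g f q / 2^(K-1)) * Y i q) z - Ex Om (Tst n nq (\<lambda>i q. (g f q / 2^(K-1)) * Y i q))"
  using tau_entry[OF f z] tau_mean[OF f] ET by simp

lemma theta_center:
  assumes h: "h < H" and j: "j < card (tier h) * L" and z: "z \<in> Om"
  shows "thetahat K iota eff n L nq tier x h z $ j - Ex Om (\<lambda>w. thetahat K iota eff n L nq tier x h w $ j)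
     = Tst n nq (\<lambda>i q. (c q h $ (j div L) / 2^(K-1)) * x i (j mod L)) z
       - Ex Om (Tst n nq (\<lambda>i q. (c q h $ (j div L) / 2^(K-1)) * x i (j mod L)))"
proof -
  have "Ex Om (\<lambda>w. thetahat K iota eff n L nq tier x h w $ j)
      = Ex Om (Tst n nq (\<lambda>i q. (c q h $ (j div L) / 2^(K-1)) * x i (j mod L)))"
    by (rule Ex_cong) (simp add: theta_entry[OF h j])
  then show ?thesis using theta_entry[OF h j z] by simp
qed

lemma cov_tt:
  assumes h: "h < H" and h': "h' < H" and j1: "j1 < card (tier h) * L" and j2: "j2 < card (tier h') * L"
  shows "Ex Om (\<lambda>z. (thetahat K iota eff n L nq tier x h z $ j1 - Ex Om (\<lambda>w. thetahat K iota eff n L nq tier x h w $ j1))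
                 * (thetahat K iota eff n L nq tier x h' z $ j2 - Ex Om (\<lambda>w. thetahat K iota eff n L nq tier x h' w $ j2)))
     = (\<Sum>q<2^K. (1 / real (nq q)) * ((c q h $ (j1 div L) / 2^(K-1)) * (c q h' $ (j2 div L) / 2^(K-1)))
          * Sxx n L x $$ (j1 mod L, j2 mod L))"
proof -
  have L: "L > 0" using j1 by (cases L) auto
  have jd: "j2 div L < card (tier h')" using j2 by (simp add: less_mult_imp_div_less)
  have jm: "j1 mod L < L" "j2 mod L < L" using L by simp_all
  have "Ex Om (\<lambda>z. (thetahat K iota eff n L nq tier x h z $ j1 - Ex Om (\<lambda>w. thetahat K iota eff n L nq tier x h w $ j1))
                 * (thetahat K iota eff n L nq tier x h' z $ j2 - Ex Om (\<lambda>w. thetahat K iota eff n L nq tier x h' w $ j2)))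
      = Ex Om (\<lambda>z. (Tst n nq (\<lambda>i q. (c q h $ (j1 div L) / 2^(K-1)) * x i (j1 mod L)) z
                      - Ex Om (Tst n nq (\<lambda>i q. (c q h $ (j1 div L) / 2^(K-1)) * x i (j1 mod L))))
                 * (Tst n nq (\<lambda>i q. (c q h' $ (j2 div L) / 2^(K-1)) * x i (j2 mod L)) z
                      - Ex Om (Tst n nq (\<lambda>i q. (c q h' $ (j2 div L) / 2^(K-1)) * x i (j2 mod L)))))"
    by (rule Ex_cong) (simp only: theta_center[OF h j1] theta_center[OF h' j2])
  also have "\<dots> = (\<Sum>q<2^K. (1 / real (nq q)) * ((c q h $ (j1 div L) / 2^(K-1)) * (c q h' $ (j2 div L) / 2^(K-1)))
          * ((\<Sum>i<n. (x i (j1 mod L) - Ybar n (\<lambda>i q. x i (j1 mod L)) q) * (x i (j2 mod L) - (\<Sum>i<n. x i (j2 mod L)) / real n)) / (real n - 1)))"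
    by (rule Cov_lin[OF csum_scaled[OF h' jd]])
  also have "\<dots> = (\<Sum>q<2^K. (1 / real (nq q)) * ((c q h $ (j1 div L) / 2^(K-1)) * (c q h' $ (j2 div L) / 2^(K-1)))
          * Sxx n L x $$ (j1 mod L, j2 mod L))"
    using jm by (simp add: Sxx_entry Ybar_def xbar_def)
  finally show ?thesis .
qed

lemma cov_taut:
  assumes h: "h < H" and f: "f < F" and j: "j < card (tier h) * L"
  shows "Ex Om (\<lambda>z. ((tauhat K iota eff n nq Y z - tau K iota eff n Y) $ f - Ex Om (\<lambda>w. (tauhat K iota eff n nq Y w - tau K iota eff n Y) $ f))
                 * (thetahat K iota eff n L nq tier x h z $ j - Ex Om (\<lambda>w. thetahat K iota eff n L nq tier x h w $ j)))
     = (\<Sum>q<2^K. (1 / real (nq q)) * ((g f q / 2^(K-1)) * (c q h $ (j div L) / 2^(K-1)))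
          * Sqx n L Y x q $$ (0, j mod L))"
proof -
  have L: "L > 0" using j by (cases L) auto
  have jd: "j div L < card (tier h)" using j by (simp add: less_mult_imp_div_less)
  have jm: "j mod L < L" using L by simp
  have "Ex Om (\<lambda>z. ((tauhat K iota eff n nq Y z - tau K iota eff n Y) $ f - Ex Om (\<lambda>w. (tauhat K iota eff n nq Y w - tau K iota eff n Y) $ f))
                 * (thetahat K iota eff n L nq tier x h z $ j - Ex Om (\<lambda>w. thetahat K iota eff n L nq tier x h w $ j)))
      = Ex Om (\<lambda>z. (Tst n nq (\<lambda>i q. (g f q / 2^(K-1)) * Y i q) z - Ex Om (Tst n nq (\<lambda>i q. (g f q / 2^(K-1)) * Y i q)))
                 * (Tst n nq (\<lambda>i q. (c q h $ (j div L) / 2^(K-1)) * x i (j mod L)) z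
                      - Ex Om (Tst n nq (\<lambda>i q. (c q h $ (j div L) / 2^(K-1)) * x i (j mod L)))))"
    by (rule Ex_cong) (simp only: tau_center[OF f] theta_center[OF h j])
  also have "\<dots> = (\<Sum>q<2^K. (1 / real (nq q)) * ((g f q / 2^(K-1)) * (c q h $ (j div L) / 2^(K-1)))
          * ((\<Sum>i<n. (Y i q - Ybar n Y q) * (x i (j mod L) - (\<Sum>i<n. x i (j mod L)) / real n)) / (real n - 1)))"
    by (rule Cov_lin[OF csum_scaled[OF h jd]])
  also have "\<dots> = (\<Sum>q<2^K. (1 / real (nq q)) * ((g f q / 2^(K-1)) * (c q h $ (j div L) / 2^(K-1)))
          * Sqx n L Y x q $$ (0, j mod L))"
    using jm by (simp add: Sqx_entry xbar_def)
  finally show ?thesis .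
qed

end

lemma alg2: "(p::real) \<noteq> 0 \<Longrightarrow> r \<noteq> 0 \<Longrightarrow> (1 / r) * ((a / p) * (b / p)) * s = (1 / (p * p * r)) * (a * b * s)"
  by (simp add: field_simps)

lemma alg3: "(p::real) \<noteq> 0 \<Longrightarrow> r \<noteq> 0 \<Longrightarrow> (1 / r) * ((a / p) * (b / p)) * s = s * ((1 / (p * p * r)) * a * b)"
  by (simp add: field_simps)

context full begin

lemma thall_aux:
  "set hs \<subseteq> {..<H} \<Longrightarrow>
    (\<forall>z. dim_vec (foldr (\<lambda>h v. thetahat K iota eff n L nq tier x h z @\<^sub>v v) hs (vec 0 (\<lambda>_. 0)))
          = sum_list (map (\<lambda>h. card (tier h) * L) hs))
  \<and> (\<forall>j < sum_list (map (\<lambda>h. card (tier h) * L) hs).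
        Ex Om (\<lambda>z. foldr (\<lambda>h v. thetahat K iota eff n L nq tier x h z @\<^sub>v v) hs (vec 0 (\<lambda>_. 0)) $ j) = 0)"
proof (induction hs)
  case Nil
  then show ?case by simp
next
  case (Cons a hs)
  then have a: "a < H" and hs: "set hs \<subseteq> {..<H}" by auto
  let ?R = "\<lambda>z. foldr (\<lambda>h v. thetahat K iota eff n L nq tier x h z @\<^sub>v v) hs (vec 0 (\<lambda>_. 0))"
  let ?D = "sum_list (map (\<lambda>h. card (tier h) * L) hs)"
  have dR: "\<forall>z. dim_vec (?R z) = ?D" and eR: "\<forall>j < ?D. Ex Om (\<lambda>z. ?R z $ j) = 0" using Cons.IH[OF hs] by auto
  have d: "dim_vec (thetahat K iota eff n L nq tier x a z @\<^sub>v ?R z) = card (tier a) * L + ?D" for z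
    using dR dim_theta by simp
  show ?case
  proof (intro conjI allI impI)
    fix z show "dim_vec (foldr (\<lambda>h v. thetahat K iota eff n L nq tier x h z @\<^sub>v v) (a # hs) (vec 0 (\<lambda>_. 0)))
          = sum_list (map (\<lambda>h. card (tier h) * L) (a # hs))" using d by simp
  next
    fix j assume j: "j < sum_list (map (\<lambda>h. card (tier h) * L) (a # hs))"
    then have j': "j < card (tier a) * L + ?D" by simp
    have "Ex Om (\<lambda>z. foldr (\<lambda>h v. thetahat K iota eff n L nq tier x h z @\<^sub>v v) (a # hs) (vec 0 (\<lambda>_. 0)) $ j)
        = Ex Om (\<lambda>z. if j < card (tier a) * L then thetahat K iota eff n L nq tier x a z $ j else ?R z $ (j - card (tier a) * L))"
      by (rule Ex_cong) (use j' dR dim_theta in simp)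
    also have "\<dots> = 0"
    proof (cases "j < card (tier a) * L")
      case True
      then show ?thesis using theta_mean[OF a True] by simp
    next
      case False
      then have "j - card (tier a) * L < ?D" using j' by simp
      then show ?thesis using False eR by simp
    qed
    finally show "Ex Om (\<lambda>z. foldr (\<lambda>h v. thetahat K iota eff n L nq tier x h z @\<^sub>v v) (a # hs) (vec 0 (\<lambda>_. 0)) $ j) = 0" .
  qed
qed

lemma sum_dims: "sum_list (map (\<lambda>h. card (tier h) * L) [0..<H]) = F * L"
proof -
  have "sum_list (map (\<lambda>h. card (tier h) * L) [0..<H]) = (\<Sum>h\<in>{..<H}. card (tier h) * L)"
    by (simp add: sum_set_upt_conv_sum_list_nat[symmetric] atLeast0LessThan)
  also have "\<dots> = (\<Sum>h\<in>{..<H}. card (tier h)) * L" by (simp add: sum_distrib_right)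
  also have "(\<Sum>h\<in>{..<H}. card (tier h)) = card (\<Union>h<H. tier h)"
  proof (rule card_UN_disjoint[symmetric])
    show "finite {..<H}" by simp
    show "\<forall>i\<in>{..<H}. finite (tier i)" using finS[OF tier_sub] by simp
    show "\<forall>i\<in>{..<H}. \<forall>j\<in>{..<H}. i \<noteq> j \<longrightarrow> tier i \<inter> tier j = {}" using tier_disj by simp
  qed
  also have "\<dots> = F" using tier_cover by simp
  finally show ?thesis .
qed

lemma mean_part:
  "Evec Om (F + F * L)
      (\<lambda>z. (tauhat K iota eff n nq Y z - tau K iota eff n Y) @\<^sub>v thetahat_all K iota eff n L nq tier H x z)
   = 0\<^sub>v (F + F * L)"
proof -
  have A: "\<forall>z. dim_vec (thetahat_all K iota eff n L nq tier H x z) = F * L"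
   and B: "\<forall>j < F * L. Ex Om (\<lambda>z. thetahat_all K iota eff n L nq tier H x z $ j) = 0"
  proof -
    have s: "set [0..<H] \<subseteq> {..<H}" by auto
    note TA = thall_aux[where hs = "[0..<H]" and L = L and x = x, OF s]
    show "\<forall>z. dim_vec (thetahat_all K iota eff n L nq tier H x z) = F * L"
      using TA sum_dims[where L = L] unfolding thetahat_all_def by simp
    show "\<forall>j < F * L. Ex Om (\<lambda>z. thetahat_all K iota eff n L nq tier H x z $ j) = 0"
      using TA sum_dims[where L = L] unfolding thetahat_all_def by simp
  qed
  have dX: "dim_vec (tauhat K iota eff n nq Y z - tau K iota eff n Y) = F" for z using dim_tau by simp
  show ?thesis unfolding Evec_def
  proof (rule eq_vecI)
    show "dim_vec (vec (F + F * L) (\<lambda>i. Ex Om (\<lambda>z. ((tauhat K iota eff n nq Y z - tau K iota eff n Y) @\<^sub>v thetahat_all K iota eff n L nq tier H x z) $ i)))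
        = dim_vec (0\<^sub>v (F + F * L))" by simp
    fix i assume "i < dim_vec (0\<^sub>v (F + F * L))"
    then have i: "i < F + F * L" by simp
    have "Ex Om (\<lambda>z. ((tauhat K iota eff n nq Y z - tau K iota eff n Y) @\<^sub>v thetahat_all K iota eff n L nq tier H x z) $ i)
        = Ex Om (\<lambda>z. if i < F then (tauhat K iota eff n nq Y z - tau K iota eff n Y) $ i else thetahat_all K iota eff n L nq tier H x z $ (i - F))"
      by (rule Ex_cong) (use i A dX in simp)
    also have "\<dots> = 0"
    proof (cases "i < F")
      case True
      then show ?thesis using tau_mean[OF True] by simp
    next
      case False
      then show ?thesis using B i by simp
    qed
    finally show "vec (F + F * L) (\<lambda>i. Ex Om (\<lambda>z. ((tauhat K iota eff n nq Y z - tau K iota eff n Y) @\<^sub>v thetahat_all K iota eff n L nq tier H x z) $ i)) $ i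
        = 0\<^sub>v (F + F * L) $ i" using i by simp
  qed
qed

lemma p0: "(2::real) ^ (K - 1) \<noteq> 0" by simp
lemma nq0: "q < 2^K \<Longrightarrow> real (nq q) \<noteq> 0" using nq_pos by force

lemma cov1:
  assumes h: "h < H"
  shows "Cov Om F (card (tier h) * L)
              (\<lambda>z. tauhat K iota eff n nq Y z - tau K iota eff n Y)
              (thetahat K iota eff n L nq tier x h)
            = W_taux K iota eff n L nq tier Y x h"
proof (rule eq_matI)
  show "dim_row (Cov Om F (card (tier h) * L) (\<lambda>z. tauhat K iota eff n nq Y z - tau K iota eff n Y) (thetahat K iota eff n L nq tier x h))
      = dim_row (W_taux K iota eff n L nq tier Y x h)" by (simp add: Cov_def W_taux_def msum_def)
  show "dim_col (Cov Om F (card (tier h) * L) (\<lambda>z. tauhat K iota eff n nq Y z - tau K iota eff n Y) (thetahat K iota eff n L nq tier x h))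
      = dim_col (W_taux K iota eff n L nq tier Y x h)" by (simp add: Cov_def W_taux_def msum_def)
  fix f j assume "f < dim_row (W_taux K iota eff n L nq tier Y x h)" "j < dim_col (W_taux K iota eff n L nq tier Y x h)"
  then have f: "f < F" and j: "j < card (tier h) * L" by (simp_all add: W_taux_def msum_def)
  show "Cov Om F (card (tier h) * L) (\<lambda>z. tauhat K iota eff n nq Y z - tau K iota eff n Y) (thetahat K iota eff n L nq tier x h) $$ (f, j)
      = W_taux K iota eff n L nq tier Y x h $$ (f, j)"
    unfolding Cov_entry[OF f j] cov_taut[OF h f j] Wtx_entry[OF h f j] pow2
    by (intro sum.cong refl) (simp add: alg2[OF p0 nq0])
qed

lemma cov2:
  assumes h: "h < H"
  shows "Cov Om (card (tier h) * L) (card (tier h) * L)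
              (thetahat K iota eff n L nq tier x h) (thetahat K iota eff n L nq tier x h)
            = W_xx K iota eff n L nq tier x h"
proof (rule eq_matI)
  show "dim_row (Cov Om (card (tier h) * L) (card (tier h) * L) (thetahat K iota eff n L nq tier x h) (thetahat K iota eff n L nq tier x h))
      = dim_row (W_xx K iota eff n L nq tier x h)" by (simp add: Cov_def W_xx_def msum_def)
  show "dim_col (Cov Om (card (tier h) * L) (card (tier h) * L) (thetahat K iota eff n L nq tier x h) (thetahat K iota eff n L nq tier x h))
      = dim_col (W_xx K iota eff n L nq tier x h)" by (simp add: Cov_def W_xx_def msum_def)
  fix j1 j2 assume "j1 < dim_row (W_xx K iota eff n L nq tier x h)" "j2 < dim_col (W_xx K iota eff n L nq tier x h)"
  then have j1: "j1 < card (tier h) * L" and j2: "j2 < card (tier h) * L" by (simp_all add: W_xx_def msum_def)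
  show "Cov Om (card (tier h) * L) (card (tier h) * L) (thetahat K iota eff n L nq tier x h) (thetahat K iota eff n L nq tier x h) $$ (j1, j2)
      = W_xx K iota eff n L nq tier x h $$ (j1, j2)"
    unfolding Cov_entry[OF j1 j2] cov_tt[OF h h j1 j2] Wxx_entry[OF h j1 j2] pow2
    by (intro sum.cong refl) (simp add: alg2[OF p0 nq0])
qed

lemma cov3:
  assumes h: "h < H" and h': "h' < H" and hh: "h \<noteq> h'"
  shows "Cov Om (card (tier h) * L) (card (tier h') * L)
              (thetahat K iota eff n L nq tier x h) (thetahat K iota eff n L nq tier x h')
            = 0\<^sub>m (card (tier h) * L) (card (tier h') * L)"
proof (rule eq_matI)
  show "dim_row (Cov Om (card (tier h) * L) (card (tier h') * L) (thetahat K iota eff n L nq tier x h) (thetahat K iota eff n L nq tier x h'))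
      = dim_row (0\<^sub>m (card (tier h) * L) (card (tier h') * L))" by (simp add: Cov_def)
  show "dim_col (Cov Om (card (tier h) * L) (card (tier h') * L) (thetahat K iota eff n L nq tier x h) (thetahat K iota eff n L nq tier x h'))
      = dim_col (0\<^sub>m (card (tier h) * L) (card (tier h') * L))" by (simp add: Cov_def)
  fix j1 j2 assume "j1 < dim_row (0\<^sub>m (card (tier h) * L) (card (tier h') * L))" "j2 < dim_col (0\<^sub>m (card (tier h) * L) (card (tier h') * L))"
  then have j1: "j1 < card (tier h) * L" and j2: "j2 < card (tier h') * L" by simp_all
  have jd: "j1 div L < card (tier h)" "j2 div L < card (tier h')" using j1 j2 by (simp_all add: less_mult_imp_div_less)
  have orth: "(\<Sum>q<2^K. w q * c q h $ (j1 div L) * c q h' $ (j2 div L)) = 0"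
  proof (cases "h' < h")
    case True
    then show ?thesis using c_orth[OF True h jd(1) jd(2)] by simp
  next
    case False
    then have "h < h'" using hh by simp
    then have "(\<Sum>q<2^K. w q * c q h' $ (j2 div L) * c q h $ (j1 div L)) = 0" using c_orth[OF _ h' jd(2) jd(1)] by simp
    then show ?thesis by (simp add: mult_ac)
  qed
  have "Cov Om (card (tier h) * L) (card (tier h') * L) (thetahat K iota eff n L nq tier x h) (thetahat K iota eff n L nq tier x h') $$ (j1, j2)
      = (\<Sum>q<2^K. Sxx n L x $$ (j1 mod L, j2 mod L) * (w q * c q h $ (j1 div L) * c q h' $ (j2 div L)))"
    unfolding Cov_entry[OF j1 j2] cov_tt[OF h h' j1 j2] pow2
    by (intro sum.cong refl) (simp add: alg3[OF p0 nq0] mult_ac)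
  also have "\<dots> = Sxx n L x $$ (j1 mod L, j2 mod L) * (\<Sum>q<2^K. w q * c q h $ (j1 div L) * c q h' $ (j2 div L))"
    by (rule sum_distrib_left[symmetric])
  also have "\<dots> = 0" by (simp only: orth mult_zero_right)
  finally show "Cov Om (card (tier h) * L) (card (tier h') * L) (thetahat K iota eff n L nq tier x h) (thetahat K iota eff n L nq tier x h') $$ (j1, j2)
      = 0\<^sub>m (card (tier h) * L) (card (tier h') * L) $$ (j1, j2)" using j1 j2 by simp
qed

end

theorem proposition6:
  fixes K n L H :: nat
    and iota :: "nat \<Rightarrow> nat \<Rightarrow> real"
    and eff :: "nat \<Rightarrow> nat set"
    and nq :: "nat \<Rightarrow> nat"
    and tier :: "nat \<Rightarrow> nat set"
    and Y :: "nat \<Rightarrow> nat \<Rightarrow> real"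
    and x :: "nat \<Rightarrow> nat \<Rightarrow> real"
  assumes K: "K \<ge> 1"
    and iota_bij: "bij_betw (\<lambda>q. restrict (iota q) {0..<K}) {0..<2^K} ({0..<K} \<rightarrow>\<^sub>E {-1, 1})"
    and eff_bij: "bij_betw eff {0..<2^K - 1} {A. A \<subseteq> {0..<K} \<and> A \<noteq> {}}"
    and nq_pos: "\<forall>q<2^K. nq q \<ge> 1"
    and nq_sum: "(\<Sum>q<2^K. nq q) = n"
    and tier_nonempty: "\<forall>h<H. tier h \<noteq> {}"
    and tier_disj: "\<forall>h<H. \<forall>h'<H. h \<noteq> h' \<longrightarrow> tier h \<inter> tier h' = {}"
    and tier_cover: "(\<Union>h<H. tier h) = {0..<2^K - 1}"
  shows
    "Evec (assignments n (2^K) nq) (2^K - 1 + (2^K - 1) * L)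
        (\<lambda>z. (tauhat K iota eff n nq Y z - tau K iota eff n Y)
              @\<^sub>v thetahat_all K iota eff n L nq tier H x z)
      = 0\<^sub>v (2^K - 1 + (2^K - 1) * L)
     \<and> (\<forall>h<H.
          Cov (assignments n (2^K) nq) (2^K - 1) (card (tier h) * L)
              (\<lambda>z. tauhat K iota eff n nq Y z - tau K iota eff n Y)
              (thetahat K iota eff n L nq tier x h)
            = W_taux K iota eff n L nq tier Y x h)
     \<and> (\<forall>h<H.
          Cov (assignments n (2^K) nq) (card (tier h) * L) (card (tier h) * L)
              (thetahat K iota eff n L nq tier x h) (thetahat K iota eff n L nq tier x h)
            = W_xx K iota eff n L nq tier x h)
     \<and> (\<forall>h<H. \<forall>h'<H. h \<noteq> h' \<longrightarrow>
          Cov (assignments n (2^K) nq) (card (tier h) * L) (card (tier h') * L)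
              (thetahat K iota eff n L nq tier x h) (thetahat K iota eff n L nq tier x h')
            = 0\<^sub>m (card (tier h) * L) (card (tier h') * L))"
proof -
  have Q2: "(2::nat) ^ K \<ge> 2"
  proof -
    have "(2::nat) ^ 1 \<le> 2 ^ K" using K by (rule power_increasing) simp
    then show ?thesis by simp
  qed
  interpret full n K nq iota eff tier H
  proof unfold_locales
    show "\<forall>q<2 ^ K. 1 \<le> nq q" by (rule nq_pos)
    show "(\<Sum>q<2 ^ K. nq q) = n" by (rule nq_sum)
    show "2 \<le> (2::nat) ^ K" by (rule Q2)
    show "1 \<le> K" by (rule K)
    show "bij_betw (\<lambda>q. restrict (iota q) {0..<K}) {0..<2 ^ K} ({0..<K} \<rightarrow>\<^sub>E {- 1, 1})" by (rule iota_bij)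
    show "bij_betw eff {0..<2 ^ K - 1} {A. A \<subseteq> {0..<K} \<and> A \<noteq> {}}" by (rule eff_bij)
    show "\<forall>h<H. tier h \<noteq> {}" by (rule tier_nonempty)
    show "\<forall>h<H. \<forall>h'<H. h \<noteq> h' \<longrightarrow> tier h \<inter> tier h' = {}" by (rule tier_disj)
    show "(\<Union>h<H. tier h) = {0..<2 ^ K - 1}" by (rule tier_cover)
  qed
  show ?thesis
  proof (intro conjI allI impI)
    show "Evec (assignments n (2^K) nq) (2^K - 1 + (2^K - 1) * L)
        (\<lambda>z. (tauhat K iota eff n nq Y z - tau K iota eff n Y)
              @\<^sub>v thetahat_all K iota eff n L nq tier H x z)
      = 0\<^sub>v (2^K - 1 + (2^K - 1) * L)" by (rule mean_part)
  next
    fix h assume "h < H"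
    then show "Cov (assignments n (2^K) nq) (2^K - 1) (card (tier h) * L)
              (\<lambda>z. tauhat K iota eff n nq Y z - tau K iota eff n Y)
              (thetahat K iota eff n L nq tier x h)
            = W_taux K iota eff n L nq tier Y x h" by (rule cov1)
  next
    fix h assume "h < H"
    then show "Cov (assignments n (2^K) nq) (card (tier h) * L) (card (tier h) * L)
              (thetahat K iota eff n L nq tier x h) (thetahat K iota eff n L nq tier x h)
            = W_xx K iota eff n L nq tier x h" by (rule cov2)
  next
    fix h h' assume "h < H" "h' < H" "h \<noteq> h'"
    then show "Cov (assignments n (2^K) nq) (card (tier h) * L) (card (tier h') * L)
              (thetahat K iota eff n L nq tier x h) (thetahat K iota eff n L nq tier x h')
            = 0\<^sub>m (card (tier h) * L) (card (tier h') * L)" by (rule cov3)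
  qed
qed

end
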